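(* Let $0<v_{\min}<v_{\max}<\infty$, let $p_-,p_+\ge 0$ be integrable, even functions on $\mathbb{R}$ vanishing whenever $|v|\le v_{\min}$ or $|v|\ge v_{\max}$. For $k\ge 0$ put $F_k^-=\int_{v_{\min}}^{v_{\max}}v^kp_-(v)\,dv$, $F_k^+=\int_{-v_{\max}}^{-v_{\min}}v^kp_+(v)\,dv$, $Q_k=F_k^--F_k^+$, and assume the mechanical equilibrium condition $Q_2=0$. For masses $M>m>0$ write $\varepsilon=m/M$, fix $\bar V>0$ with $\bar V<\frac{M-m}{3M+m}v_{\min}$, and let $W(t)$ be the Markov jump process on $(-\bar V,\bar V)$ in which, from state $u$, a jump caused by velocity $v$ occurs with rate density $(v-u)p_-(v)$ for $v>0$ and $(u-v)p_+(v)$ for $v<0$, and moves the state to $V'=\frac{M-m}{M+m}u+\frac{2m}{M+m}v$, reflected as $2\bar V-V'$ if $V'>\bar V$ and as $-2\bar V-V'$ if $V'<-\bar V$. Let $\langle\cdot\rangle$ denote expectation with respect to the unique stationary distribution $\mu_0$ of $W$. Then, as $\varepsilon\to 0$ (with $p_\pm$ and $\bar V$ fixed), $$\langle W^2\rangle=\frac{Q_3}{2Q_1}\,\varepsilon+O(\varepsilon^2),\qquad \langle W\rangle=\frac{Q_0Q_3}{4Q_1^2}\,\varepsilon+O(\varepsilon^2).$$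
   Context: $W(t)$ models the velocity of a heavy piston of mass $M$ in a one-dimensional ideal gas of atoms of mass $m$ whose phase-space density is $p_-(v)$ to the left and $p_+(v)$ to the right of the piston, with elastic collisions; $Q_2=0$ means equal pressures on both sides. *)

theory Defs
  imports "HOL-Probability.Probability"
begin

definition post_coll :: "real \<Rightarrow> real \<Rightarrow> real \<Rightarrow> real \<Rightarrow> real" where
  "post_coll M m u v = (M - m) / (M + m) * u + 2 * m / (M + m) * v"

definition refl_state :: "real \<Rightarrow> real \<Rightarrow> real" where
  "refl_state Vb x = (if x > Vb then 2 * Vb - x else if x < - Vb then - 2 * Vb - x else x)"

definition jump_gen ::
  "(real \<Rightarrow> real) \<Rightarrow> (real \<Rightarrow> real) \<Rightarrow> real \<Rightarrow> real \<Rightarrow> real \<Rightarrow> (real \<Rightarrow> real) \<Rightarrow> real \<Rightarrow> real" where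
  "jump_gen pm pp M m Vb f u =
     set_lebesgue_integral lborel {0<..}
        (\<lambda>v. (v - u) * pm v * (f (refl_state Vb (post_coll M m u v)) - f u))
   + set_lebesgue_integral lborel {..<0}
        (\<lambda>v. (u - v) * pp v * (f (refl_state Vb (post_coll M m u v)) - f u))"

text \<open>Stationary distribution of the (bounded-rate) jump process: a Borel probability
  measure concentrated on (-Vb, Vb) annihilated by the generator on all bounded
  Borel test functions.\<close>
definition stationary_dist ::
  "(real \<Rightarrow> real) \<Rightarrow> (real \<Rightarrow> real) \<Rightarrow> real \<Rightarrow> real \<Rightarrow> real \<Rightarrow> real measure \<Rightarrow> bool" where
  "stationary_dist pm pp M m Vb \<mu> \<longleftrightarrow>
     sets \<mu> = sets borel \<and> prob_space \<mu> \<and> emeasure \<mu> {- Vb<..<Vb} = 1 \<and>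
     (\<forall>f. f \<in> borel_measurable borel \<and> bounded (range f) \<longrightarrow>
        integrable \<mu> (jump_gen pm pp M m Vb f) \<and>
        integral\<^sup>L \<mu> (jump_gen pm pp M m Vb f) = 0)"

definition Fminus :: "real \<Rightarrow> real \<Rightarrow> (real \<Rightarrow> real) \<Rightarrow> nat \<Rightarrow> real" where
  "Fminus vmin vmax pm k = set_lebesgue_integral lborel {vmin..vmax} (\<lambda>v. v ^ k * pm v)"

definition Fplus :: "real \<Rightarrow> real \<Rightarrow> (real \<Rightarrow> real) \<Rightarrow> nat \<Rightarrow> real" where
  "Fplus vmin vmax pp k = set_lebesgue_integral lborel {-vmax..-vmin} (\<lambda>v. v ^ k * pp v)"

definition Qk :: "real \<Rightarrow> real \<Rightarrow> (real \<Rightarrow> real) \<Rightarrow> (real \<Rightarrow> real) \<Rightarrow> nat \<Rightarrow> real" where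
  "Qk vmin vmax pm pp k = Fminus vmin vmax pm k - Fplus vmin vmax pp k"

end

theory Submission
  imports Defs
begin

lemma wint:
  fixes w g :: "real \<Rightarrow> real"
  assumes "integrable lborel w" "g \<in> borel_measurable borel"
    and "\<And>v. w v \<noteq> 0 \<Longrightarrow> \<bar>g v\<bar> \<le> K"
  shows "integrable lborel (\<lambda>v. g v * w v)"
proof (rule Bochner_Integration.integrable_bound[where f="\<lambda>v. K * \<bar>w v\<bar>"])
  show "integrable lborel (\<lambda>v. K * \<bar>w v\<bar>)" using assms(1) by auto
  show "(\<lambda>v. g v * w v) \<in> borel_measurable lborel"
    using assms(1,2) by (auto intro!: borel_measurable_times borel_measurable_integrable)
  show "AE x in lborel. norm (g x * w x) \<le> norm (K * \<bar>w x\<bar>)"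
  proof (rule AE_I2)
    fix x show "norm (g x * w x) \<le> norm (K * \<bar>w x\<bar>)"
    proof (cases "w x = 0")
      case False
      then have "\<bar>g x\<bar> \<le> K" using assms(3) by auto
      then show ?thesis by (simp add: abs_mult mult_right_mono)
    qed simp
  qed
qed

lemma wbound:
  fixes w g :: "real \<Rightarrow> real"
  assumes "integrable lborel w" "g \<in> borel_measurable borel"
    and "\<And>v. w v \<noteq> 0 \<Longrightarrow> \<bar>g v\<bar> \<le> K"
  shows "\<bar>\<integral>v. g v * w v \<partial>lborel\<bar> \<le> K * (\<integral>v. \<bar>w v\<bar> \<partial>lborel)"
proof -
  have i: "integrable lborel (\<lambda>v. g v * w v)" using wint[OF assms] .
  have "\<bar>\<integral>v. g v * w v \<partial>lborel\<bar> \<le> (\<integral>v. \<bar>g v * w v\<bar> \<partial>lborel)"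
    by (rule integral_abs_bound)
  also have "\<dots> \<le> (\<integral>v. K * \<bar>w v\<bar> \<partial>lborel)"
  proof (rule integral_mono)
    show "integrable lborel (\<lambda>v. \<bar>g v * w v\<bar>)" using i by auto
    show "integrable lborel (\<lambda>v. K * \<bar>w v\<bar>)" using assms(1) by auto
    fix x show "\<bar>g x * w x\<bar> \<le> K * \<bar>w x\<bar>"
    proof (cases "w x = 0")
      case False
      then have "\<bar>g x\<bar> \<le> K" using assms(3) by auto
      then show ?thesis by (simp add: abs_mult mult_right_mono)
    qed simp
  qed
  also have "\<dots> = K * (\<integral>v. \<bar>w v\<bar> \<partial>lborel)" by simp
  finally show ?thesis .
qed

lemma refl_meas: "refl_state Vb \<in> borel_measurable borel"
  unfolding refl_state_def by measurable

lemma post_meas: "post_coll M m u \<in> borel_measurable borel"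
  unfolding post_coll_def by measurable

lemma pow_diff_bound:
  fixes a b R :: real
  shows "\<bar>a\<bar> \<le> R \<Longrightarrow> \<bar>b\<bar> \<le> R \<Longrightarrow> \<bar>a^n - b^n\<bar> \<le> real n * R^(n-1) * \<bar>a - b\<bar>"
proof (induction n)
  case (Suc n)
  have R: "R \<ge> 0" using Suc.prems by linarith
  have "a^Suc n - b^Suc n = a * (a^n - b^n) + b^n * (a - b)" by (simp add: algebra_simps)
  moreover have "\<bar>a * (a^n - b^n) + b^n * (a - b)\<bar> \<le> \<bar>a * (a^n - b^n)\<bar> + \<bar>b^n * (a - b)\<bar>"
    by (rule abs_triangle_ineq)
  ultimately have "\<bar>a^Suc n - b^Suc n\<bar> \<le> \<bar>a\<bar> * \<bar>a^n - b^n\<bar> + \<bar>b\<bar>^n * \<bar>a - b\<bar>"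
    by (simp add: abs_mult power_abs)
  also have "\<dots> \<le> R * (real n * R^(n-1) * \<bar>a - b\<bar>) + R^n * \<bar>a - b\<bar>"
    using Suc R by (intro add_mono mult_mono power_mono) auto
  also have "\<dots> = real (Suc n) * R^(Suc n - 1) * \<bar>a - b\<bar>"
    by (cases n) (auto simp: algebra_simps)
  finally show ?case .
qed simp

lemma refl_facts:
  fixes Vb x :: real
  assumes "0 < Vb" "\<bar>x\<bar> \<le> 3 * Vb"
  shows "\<bar>refl_state Vb x\<bar> \<le> Vb" "\<bar>refl_state Vb x\<bar> \<le> \<bar>x\<bar>"
    "\<bar>refl_state Vb x - x\<bar> \<le> 2 * max 0 (\<bar>x\<bar> - Vb)"
    "\<bar>x\<bar> \<le> Vb \<Longrightarrow> refl_state Vb x = x"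
  using assms unfolding refl_state_def by auto

locale piston =
  fixes vmin vmax Vb :: real and pm pp :: "real \<Rightarrow> real"
  assumes vmin_pos: "0 < vmin" and vmin_less: "vmin < vmax"
    and pm_nn: "\<And>v. pm v \<ge> 0" and pp_nn: "\<And>v. pp v \<ge> 0"
    and pm_int: "integrable lborel pm" and pp_int: "integrable lborel pp"
    and pm_supp: "\<And>v. \<bar>v\<bar> \<le> vmin \<or> \<bar>v\<bar> \<ge> vmax \<Longrightarrow> pm v = 0"
    and pp_supp: "\<And>v. \<bar>v\<bar> \<le> vmin \<or> \<bar>v\<bar> \<ge> vmax \<Longrightarrow> pp v = 0"
    and Q2_zero: "Qk vmin vmax pm pp 2 = 0"
    and Vb_pos: "0 < Vb" and Vb_small: "3 * Vb < vmin"
begin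

definition "wp v = indicator {0<..} v * pm v"
definition "wm v = indicator {..<0} v * pp v"
definition "rho v = wp v - wm v"
definition "S = (\<integral>v. \<bar>rho v\<bar> \<partial>lborel)"
definition "L = vmax + Vb"
definition "Q k = Qk vmin vmax pm pp k"

lemma wp_int: "integrable lborel wp"
  unfolding wp_def using integrable_mult_indicator[of "{0<..}" lborel pm] pm_int by simp
lemma wm_int: "integrable lborel wm"
  unfolding wm_def using integrable_mult_indicator[of "{..<0}" lborel pp] pp_int by simp
lemma rho_int: "integrable lborel rho"
  unfolding rho_def using wp_int wm_int by auto

lemma wp_supp: "wp v \<noteq> 0 \<Longrightarrow> vmin < v \<and> v < vmax"
proof -
  assume h: "wp v \<noteq> 0"
  then have "v > 0" "pm v \<noteq> 0" by (auto simp: wp_def indicator_def split: if_splits)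
  then have "\<not> (\<bar>v\<bar> \<le> vmin \<or> \<bar>v\<bar> \<ge> vmax)" using pm_supp[of v] by blast
  then show ?thesis using \<open>v > 0\<close> by auto
qed
lemma wm_supp: "wm v \<noteq> 0 \<Longrightarrow> -vmax < v \<and> v < -vmin"
proof -
  assume h: "wm v \<noteq> 0"
  then have "v < 0" "pp v \<noteq> 0" by (auto simp: wm_def indicator_def split: if_splits)
  then have "\<not> (\<bar>v\<bar> \<le> vmin \<or> \<bar>v\<bar> \<ge> vmax)" using pp_supp[of v] by blast
  then show ?thesis using \<open>v < 0\<close> by auto
qed
lemma rho_supp: "rho v \<noteq> 0 \<Longrightarrow> vmin < \<bar>v\<bar> \<and> \<bar>v\<bar> < vmax"
  unfolding rho_def using wp_supp[of v] wm_supp[of v] vmin_pos by (cases "wp v = 0"; cases "wm v = 0") auto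
lemma wp_nn: "wp v \<ge> 0" unfolding wp_def using pm_nn by auto
lemma wm_nn: "wm v \<ge> 0" unfolding wm_def using pp_nn by auto
lemma rho_cases: "(rho v = wp v \<and> wm v = 0) \<or> (rho v = - wm v \<and> wp v = 0)"
  unfolding rho_def wp_def wm_def by (auto simp: indicator_def)

lemma int_rho: "g \<in> borel_measurable borel \<Longrightarrow> (\<And>v. rho v \<noteq> 0 \<Longrightarrow> \<bar>g v\<bar> \<le> K) \<Longrightarrow>
   integrable lborel (\<lambda>v. g v * rho v)"
  by (rule wint[OF rho_int])

lemma bound_rho: "g \<in> borel_measurable borel \<Longrightarrow> (\<And>v. rho v \<noteq> 0 \<Longrightarrow> \<bar>g v\<bar> \<le> K) \<Longrightarrow>
   \<bar>\<integral>v. g v * rho v \<partial>lborel\<bar> \<le> K * S"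
  unfolding S_def by (rule wbound[OF rho_int])

lemma cont_int_rho: "continuous_on UNIV g \<Longrightarrow> integrable lborel (\<lambda>v. g v * rho v)"
proof -
  assume c: "continuous_on UNIV g"
  have "compact (g ` cball 0 vmax)"
    by (rule compact_continuous_image) (auto intro: continuous_on_subset[OF c])
  then obtain K where K: "\<And>x. x \<in> g ` cball 0 vmax \<Longrightarrow> norm x \<le> K"
    using compact_imp_bounded bounded_iff by metis
  show ?thesis
  proof (rule int_rho)
    show "g \<in> borel_measurable borel" using c by (rule borel_measurable_continuous_onI)
    fix v assume "rho v \<noteq> 0"
    then have "v \<in> cball 0 vmax" using rho_supp[of v] by auto
    then show "\<bar>g v\<bar> \<le> K" using K by auto
  qed
qed

lemma poly_int_rho: "integrable lborel (\<lambda>v. c * (v - u) ^ k * rho v)"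
  by (rule cont_int_rho) (intro continuous_intros)
lemma poly_int_rho': "integrable lborel (\<lambda>v. v ^ k * rho v)"
  by (rule cont_int_rho) (intro continuous_intros)

lemma Q_eq: "Q k = (\<integral>v. v ^ k * rho v \<partial>lborel)"
proof -
  have a: "Fminus vmin vmax pm k = (\<integral>v. v ^ k * wp v \<partial>lborel)"
    unfolding Fminus_def set_lebesgue_integral_def
  proof (rule Bochner_Integration.integral_cong[OF refl])
    fix v show "indicator {vmin..vmax} v *\<^sub>R (v ^ k * pm v) = v ^ k * wp v"
    proof (cases "pm v = 0")
      case False
      then have "\<not> (\<bar>v\<bar> \<le> vmin \<or> \<bar>v\<bar> \<ge> vmax)" using pm_supp[of v] by blast
      then show ?thesis unfolding wp_def using vmin_pos by (auto simp: indicator_def)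
    qed (simp add: wp_def)
  qed
  have b: "Fplus vmin vmax pp k = (\<integral>v. v ^ k * wm v \<partial>lborel)"
    unfolding Fplus_def set_lebesgue_integral_def
  proof (rule Bochner_Integration.integral_cong[OF refl])
    fix v show "indicator {-vmax..-vmin} v *\<^sub>R (v ^ k * pp v) = v ^ k * wm v"
    proof (cases "pp v = 0")
      case False
      then have "\<not> (\<bar>v\<bar> \<le> vmin \<or> \<bar>v\<bar> \<ge> vmax)" using pp_supp[of v] by blast
      then show ?thesis unfolding wm_def using vmin_pos by (auto simp: indicator_def)
    qed (simp add: wm_def)
  qed
  have ip: "integrable lborel (\<lambda>v. v ^ k * wp v)"
  proof (rule wint[OF wp_int, where K="vmax ^ k"])
    fix v assume "wp v \<noteq> 0"
    then have "\<bar>v\<bar> \<le> vmax" using wp_supp[of v] vmin_pos by auto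
    then show "\<bar>v ^ k\<bar> \<le> vmax ^ k" by (simp add: power_abs power_mono)
  qed simp
  have im: "integrable lborel (\<lambda>v. v ^ k * wm v)"
  proof (rule wint[OF wm_int, where K="vmax ^ k"])
    fix v assume "wm v \<noteq> 0"
    then have "\<bar>v\<bar> \<le> vmax" using wm_supp[of v] vmin_pos by auto
    then show "\<bar>v ^ k\<bar> \<le> vmax ^ k" by (simp add: power_abs power_mono)
  qed simp
  show ?thesis unfolding Q_def Qk_def a b rho_def
    using Bochner_Integration.integral_diff[OF ip im] by (simp add: algebra_simps)
qed


lemma S_nn: "S \<ge> 0" unfolding S_def by simp

lemma Q1_ge: "vmin * S \<le> Q 1"
proof -
  have "vmin * S = (\<integral>v. vmin * \<bar>rho v\<bar> \<partial>lborel)" unfolding S_def by simp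
  also have "\<dots> \<le> (\<integral>v. v ^ 1 * rho v \<partial>lborel)"
  proof (rule integral_mono)
    show "integrable lborel (\<lambda>v. vmin * \<bar>rho v\<bar>)" using rho_int by auto
    show "integrable lborel (\<lambda>v. v ^ 1 * rho v)" by (rule poly_int_rho')
    fix v show "vmin * \<bar>rho v\<bar> \<le> v ^ 1 * rho v"
    proof (cases "rho v = 0")
      case False
      then have s: "vmin < \<bar>v\<bar>" using rho_supp by auto
      from rho_cases[of v] show ?thesis
      proof
        assume "rho v = wp v \<and> wm v = 0"
        then have "v > 0" using False wp_supp[of v] vmin_pos by auto
        then show ?thesis using \<open>rho v = wp v \<and> wm v = 0\<close> wp_nn[of v] s
          by (simp add: mult_right_mono)
      next
        assume "rho v = - wm v \<and> wp v = 0"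
        then have "v < 0" using False wm_supp[of v] vmin_pos by auto
        then have "vmin * wm v \<le> (- v) * wm v" using wm_nn[of v] s by (intro mult_right_mono) auto
        then show ?thesis using \<open>rho v = - wm v \<and> wp v = 0\<close> wm_nn[of v] s
          by simp
      qed
    qed simp
  qed
  finally show ?thesis using Q_eq[of 1] by simp
qed

lemma Q0_le: "\<bar>Q 0\<bar> \<le> S"
  using Q_eq[of 0] integral_abs_bound[of lborel rho] unfolding S_def by simp

lemma Q1_pos: "S > 0 \<Longrightarrow> Q 1 > 0"
  using Q1_ge vmin_pos mult_pos_pos[of vmin S] by linarith

lemma Q0_Vb: "\<bar>Q 0\<bar> * Vb \<le> Q 1 / 3"
proof -
  have "\<bar>Q 0\<bar> * Vb \<le> S * Vb" using Q0_le Vb_pos by (simp add: mult_right_mono)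
  also have "\<dots> \<le> S * (vmin / 3)" using Vb_small S_nn by (intro mult_left_mono) auto
  finally have "\<bar>Q 0\<bar> * Vb \<le> S * (vmin / 3)" .
  moreover have "S * (vmin / 3) = (vmin * S) / 3" by simp
  ultimately show ?thesis using Q1_ge by linarith
qed

definition "K k u = (\<integral>v. (v - u) ^ k * rho v \<partial>lborel)"

lemma K_expand: "K k u = (\<Sum>i\<le>k. of_nat (k choose i) * (-u) ^ (k - i) * Q i)"
proof -
  have "K k u = (\<integral>v. (\<Sum>i\<le>k. of_nat (k choose i) * (-u) ^ (k - i) * (v ^ i * rho v)) \<partial>lborel)"
    unfolding K_def
  proof (rule Bochner_Integration.integral_cong[OF refl])
    fix v
    have "(v - u) ^ k = (v + (-u)) ^ k" by simp
    also have "\<dots> = (\<Sum>i\<le>k. of_nat (k choose i) * v ^ i * (-u) ^ (k - i))" by (rule binomial_ring)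
    finally show "(v - u) ^ k * rho v = (\<Sum>i\<le>k. of_nat (k choose i) * (-u) ^ (k - i) * (v ^ i * rho v))"
      by (simp add: sum_distrib_right sum_distrib_left mult_ac)
  qed
  also have "\<dots> = (\<Sum>i\<le>k. (\<integral>v. of_nat (k choose i) * (-u) ^ (k - i) * (v ^ i * rho v) \<partial>lborel))"
    by (rule Bochner_Integration.integral_sum) (use poly_int_rho' in auto)
  also have "\<dots> = (\<Sum>i\<le>k. of_nat (k choose i) * (-u) ^ (k - i) * Q i)"
    by (simp add: Q_eq)
  finally show ?thesis .
qed

lemma K2: "K 2 u = Q 2 - 2 * u * Q 1 + u ^ 2 * Q 0"
proof -
  have e: "{..2::nat} = {0,1,2}" by auto
  show ?thesis unfolding K_expand e by (simp add: algebra_simps)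
qed

lemma K3: "K 3 u = Q 3 - 3 * u * Q 2 + 3 * u ^ 2 * Q 1 - u ^ 3 * Q 0"
proof -
  have e: "{..3::nat} = {0,1,2,3}" by auto
  have c: "(3::nat) choose 2 = 3" "(3::nat) choose 1 = 3" by (simp_all add: eval_nat_numeral)
  show ?thesis unfolding K_expand e by (simp add: c algebra_simps)
qed

lemma K_bound: "\<bar>u\<bar> \<le> Vb \<Longrightarrow> \<bar>K k u\<bar> \<le> L ^ k * S"
  unfolding K_def
proof (rule bound_rho)
  show "(\<lambda>v. (v - u) ^ k) \<in> borel_measurable borel" by measurable
  fix v assume "\<bar>u\<bar> \<le> Vb" "rho v \<noteq> 0"
  then have "\<bar>v - u\<bar> \<le> L" using rho_supp[of v] unfolding L_def by auto
  then show "\<bar>(v - u) ^ k\<bar> \<le> L ^ k" by (simp add: power_abs power_mono)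
qed

lemma jump_conv:
  fixes f :: "real \<Rightarrow> real"
  assumes f: "f \<in> borel_measurable borel" and B: "\<And>x. \<bar>f x\<bar> \<le> B"
  shows "jump_gen pm pp M m Vb f u =
     (\<integral>v. (v - u) * (f (refl_state Vb (post_coll M m u v)) - f u) * rho v \<partial>lborel)"
proof -
  define G where "G v = (v - u) * (f (refl_state Vb (post_coll M m u v)) - f u)" for v
  have Gm: "G \<in> borel_measurable borel" unfolding G_def
    using f refl_meas post_meas by measurable
  have Gb: "\<bar>G v\<bar> \<le> (vmax + \<bar>u\<bar>) * (2 * B)" if "\<bar>v\<bar> \<le> vmax" for v
  proof -
    have "\<bar>f (refl_state Vb (post_coll M m u v)) - f u\<bar> \<le> 2 * B"
      using B[of "refl_state Vb (post_coll M m u v)"] B[of u] by linarith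
    moreover have "\<bar>v - u\<bar> \<le> vmax + \<bar>u\<bar>" using that by linarith
    ultimately show ?thesis unfolding G_def abs_mult by (intro mult_mono) auto
  qed
  have ip: "integrable lborel (\<lambda>v. G v * wp v)"
    by (rule wint[OF wp_int Gm]) (use Gb wp_supp vmin_pos in force)
  have im: "integrable lborel (\<lambda>v. G v * wm v)"
    by (rule wint[OF wm_int Gm]) (use Gb wm_supp vmin_pos in force)
  have a: "set_lebesgue_integral lborel {0<..}
        (\<lambda>v. (v - u) * pm v * (f (refl_state Vb (post_coll M m u v)) - f u)) = (\<integral>v. G v * wp v \<partial>lborel)"
    unfolding set_lebesgue_integral_def G_def wp_def
    by (rule Bochner_Integration.integral_cong) (auto simp: indicator_def)
  have b: "set_lebesgue_integral lborel {..<0}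
        (\<lambda>v. (u - v) * pp v * (f (refl_state Vb (post_coll M m u v)) - f u)) = (\<integral>v. - (G v * wm v) \<partial>lborel)"
    unfolding set_lebesgue_integral_def G_def wm_def
    by (rule Bochner_Integration.integral_cong) (auto simp: indicator_def algebra_simps)
  have c: "(\<integral>v. (v - u) * (f (refl_state Vb (post_coll M m u v)) - f u) * rho v \<partial>lborel)
     = (\<integral>v. G v * wp v - G v * wm v \<partial>lborel)"
    by (rule Bochner_Integration.integral_cong) (auto simp: G_def rho_def right_diff_distrib)
  show ?thesis unfolding jump_gen_def a b c Bochner_Integration.integral_diff[OF ip im]
    by simp
qed


definition "fn n x = (max (-Vb) (min Vb x)) ^ n"
lemma fn_meas: "fn n \<in> borel_measurable borel" unfolding fn_def by measurable
lemma fn_bound: "\<bar>fn n x\<bar> \<le> Vb ^ n"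
  unfolding fn_def power_abs using Vb_pos by (intro power_mono) auto
lemma fn_id: "\<bar>x\<bar> \<le> Vb \<Longrightarrow> fn n x = x ^ n"
proof -
  assume "\<bar>x\<bar> \<le> Vb"
  then have "max (-Vb) (min Vb x) = x" by auto
  then show ?thesis unfolding fn_def by simp
qed

definition "gam M m = 2 * m / (M + m)"
lemma post_eq: "0 < m \<Longrightarrow> m < M \<Longrightarrow> post_coll M m u v = u + gam M m * (v - u)"
proof -
  assume a: "0 < m" "m < M"
  then have h: "(M - m) / (M + m) = 1 - 2 * m / (M + m)" by (simp add: field_simps)
  show ?thesis unfolding post_coll_def gam_def h by (simp add: algebra_simps diff_divide_distrib)
qed

definition "P g n u = (\<integral>v. (v - u) * ((u + g * (v - u)) ^ n - u ^ n) * rho v \<partial>lborel)"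
definition "Dp g n u = (\<integral>v. (v - u) * (fn n (refl_state Vb (u + g * (v - u))) - (u + g * (v - u)) ^ n) * rho v \<partial>lborel)"

lemma G_int:
  fixes f :: "real \<Rightarrow> real"
  assumes f: "f \<in> borel_measurable borel" and B: "\<And>x. \<bar>f x\<bar> \<le> B"
  shows "integrable lborel (\<lambda>v. (v - u) * (f (refl_state Vb (post_coll M m u v)) - f u) * rho v)"
proof (rule int_rho)
  show "(\<lambda>v. (v - u) * (f (refl_state Vb (post_coll M m u v)) - f u)) \<in> borel_measurable borel"
    using f refl_meas post_meas by measurable
  fix v assume "rho v \<noteq> 0"
  then have v: "\<bar>v\<bar> \<le> vmax" using rho_supp by force
  have "\<bar>f (refl_state Vb (post_coll M m u v)) - f u\<bar> \<le> 2 * B"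
    using B[of "refl_state Vb (post_coll M m u v)"] B[of u] by linarith
  moreover have "\<bar>v - u\<bar> \<le> vmax + \<bar>u\<bar>" using v by linarith
  ultimately show "\<bar>(v - u) * (f (refl_state Vb (post_coll M m u v)) - f u)\<bar> \<le> (vmax + \<bar>u\<bar>) * (2 * B)"
    unfolding abs_mult by (intro mult_mono) auto
qed

lemma jump_decomp:
  assumes "0 < m" "m < M" "\<bar>u\<bar> < Vb"
  shows "jump_gen pm pp M m Vb (fn n) u = P (gam M m) n u + Dp (gam M m) n u"
proof -
  let ?g = "gam M m"
  let ?T = "\<lambda>v. (v - u) * (fn n (refl_state Vb (post_coll M m u v)) - fn n u) * rho v"
  let ?A = "\<lambda>v. (v - u) * ((u + ?g * (v - u)) ^ n - u ^ n) * rho v"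
  have iT: "integrable lborel ?T" by (rule G_int[OF fn_meas fn_bound])
  have iA: "integrable lborel ?A" by (rule cont_int_rho) (intro continuous_intros)
  have fu: "fn n u = u ^ n" using assms by (intro fn_id) auto
  have "jump_gen pm pp M m Vb (fn n) u = (\<integral>v. ?T v \<partial>lborel)"
    by (rule jump_conv[OF fn_meas fn_bound])
  also have "\<dots> = (\<integral>v. ?A v \<partial>lborel) + (\<integral>v. ?T v - ?A v \<partial>lborel)"
    using Bochner_Integration.integral_diff[OF iT iA] by simp
  also have "(\<integral>v. ?T v - ?A v \<partial>lborel) = Dp ?g n u"
    unfolding Dp_def
  proof (rule Bochner_Integration.integral_cong[OF refl])
    fix v
    have e: "\<And>a b c d r::real. a * (b - c) * r - a * (d - c) * r = a * (b - d) * r"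
      by (simp add: algebra_simps)
    show "?T v - ?A v = (v - u) * (fn n (refl_state Vb (u + ?g * (v - u))) - (u + ?g * (v - u)) ^ n) * rho v"
      unfolding post_eq[OF assms(1,2)] fu by (rule e)
  qed
  finally show ?thesis unfolding P_def by simp
qed

definition "cD n = L * (real n * (2 * Vb) ^ (n - 1) * 2 * L) * 16 / Vb ^ 4 * S"

lemma D_point:
  assumes g: "0 < g" "g * L \<le> Vb / 2" and u: "\<bar>u\<bar> < Vb" and r: "rho v \<noteq> 0"
  shows "\<bar>(v - u) * (fn n (refl_state Vb (u + g * (v - u))) - (u + g * (v - u)) ^ n)\<bar>
     \<le> (L * (real n * (2 * Vb) ^ (n - 1) * 2 * L) * 16 / Vb ^ 4) * g * u ^ 4"
proof -
  define x where "x = u + g * (v - u)"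
  have v: "\<bar>v\<bar> < vmax" using rho_supp[OF r] by auto
  have vu: "\<bar>v - u\<bar> \<le> L" using v u unfolding L_def by linarith
  have xu: "\<bar>x - u\<bar> \<le> g * L" unfolding x_def using vu g by (simp add: abs_mult mult_left_mono)
  have x3: "\<bar>x\<bar> \<le> 3 * Vb" using xu u g by linarith
  note rf = refl_facts[OF Vb_pos x3]
  have fr: "fn n (refl_state Vb x) = (refl_state Vb x) ^ n" using rf(1) by (rule fn_id)
  have Lnn: "L \<ge> 0" unfolding L_def using Vb_pos vmin_pos vmin_less by linarith
  have cnn: "0 \<le> (L * (real n * (2 * Vb) ^ (n - 1) * 2 * L) * 16 / Vb ^ 4) * g * u ^ 4"
    using Lnn Vb_pos g by (intro mult_nonneg_nonneg divide_nonneg_pos) auto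
  show ?thesis
  proof (cases "\<bar>u\<bar> \<le> Vb - g * L")
    case True
    then have "\<bar>x\<bar> \<le> Vb" using xu by linarith
    then have "refl_state Vb x = x" using rf(4) by blast
    then show ?thesis using cnn unfolding x_def[symmetric] fr by simp
  next
    case False
    then have ub: "\<bar>u\<bar> \<ge> Vb / 2" using g by linarith
    have d: "\<bar>refl_state Vb x - x\<bar> \<le> 2 * (g * L)"
    proof -
      have "\<bar>x\<bar> - Vb \<le> g * L" using xu u by linarith
      then have "max 0 (\<bar>x\<bar> - Vb) \<le> g * L" using g Lnn by simp
      then show ?thesis by (intro order_trans[OF rf(3)]) simp
    qed
    have x2: "\<bar>x\<bar> \<le> 2 * Vb" using xu u g by linarith
    have pd: "\<bar>(refl_state Vb x) ^ n - x ^ n\<bar> \<le> real n * (2 * Vb) ^ (n - 1) * (2 * (g * L))"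
    proof -
      have "\<bar>(refl_state Vb x) ^ n - x ^ n\<bar> \<le> real n * (2 * Vb) ^ (n - 1) * \<bar>refl_state Vb x - x\<bar>"
        by (rule pow_diff_bound) (use rf(1) x2 Vb_pos in auto)
      also have "\<dots> \<le> real n * (2 * Vb) ^ (n - 1) * (2 * (g * L))"
        using d Vb_pos by (intro mult_left_mono) auto
      finally show ?thesis .
    qed
    have one: "1 \<le> 16 * u ^ 4 / Vb ^ 4"
    proof -
      have "(Vb / 2) ^ 4 \<le> \<bar>u\<bar> ^ 4" using ub Vb_pos by (intro power_mono) auto
      then have "Vb ^ 4 \<le> 16 * u ^ 4" by (simp add: power_divide power_abs power_even_abs)
      then show ?thesis using Vb_pos by simp
    qed
    have "\<bar>(v - u) * ((refl_state Vb x) ^ n - x ^ n)\<bar> \<le> L * (real n * (2 * Vb) ^ (n - 1) * (2 * (g * L)))"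
      unfolding abs_mult using vu pd by (intro mult_mono) auto
    also have "\<dots> \<le> L * (real n * (2 * Vb) ^ (n - 1) * (2 * (g * L))) * (16 * u ^ 4 / Vb ^ 4)"
    proof -
      have Xnn: "0 \<le> L * (real n * (2 * Vb) ^ (n - 1) * (2 * (g * L)))"
        using Lnn g Vb_pos by (intro mult_nonneg_nonneg) auto
      show ?thesis using mult_left_mono[OF one Xnn] by simp
    qed
    also have "\<dots> = (L * (real n * (2 * Vb) ^ (n - 1) * 2 * L) * 16 / Vb ^ 4) * g * u ^ 4"
      by (simp add: field_simps)
    finally show ?thesis unfolding x_def[symmetric] fr .
  qed
qed

lemma D_meas: "(\<lambda>v. (v - u) * (fn n (refl_state Vb (u + g * (v - u))) - (u + g * (v - u)) ^ n)) \<in> borel_measurable borel"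
  using fn_meas refl_meas by measurable

lemma Dp_bound:
  assumes "0 < g" "g * L \<le> Vb / 2" "\<bar>u\<bar> < Vb"
  shows "\<bar>Dp g n u\<bar> \<le> cD n * g * u ^ 4"
proof -
  have "\<bar>Dp g n u\<bar> \<le> ((L * (real n * (2 * Vb) ^ (n - 1) * 2 * L) * 16 / Vb ^ 4) * g * u ^ 4) * S"
    unfolding Dp_def by (rule bound_rho[OF D_meas D_point[OF assms]])
  then show ?thesis unfolding cD_def by (simp add: mult_ac)
qed

lemma Dp_nonpos:
  assumes "0 < g" "g * L \<le> Vb / 2" "\<bar>u\<bar> < Vb" "even n"
  shows "Dp g n u \<le> 0"
proof -
  have "Dp g n u \<le> (\<integral>v. (0::real) \<partial>(lborel::real measure))"
    unfolding Dp_def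
  proof (rule Bochner_Integration.integral_mono)
    show "integrable lborel (\<lambda>v. (v - u) * (fn n (refl_state Vb (u + g * (v - u))) - (u + g * (v - u)) ^ n) * rho v)"
      by (rule int_rho[OF D_meas D_point[OF assms(1-3)]])
    fix v
    show "(v - u) * (fn n (refl_state Vb (u + g * (v - u))) - (u + g * (v - u)) ^ n) * rho v \<le> 0"
    proof (cases "rho v = 0")
      case False
      define x where "x = u + g * (v - u)"
      have v: "\<bar>v\<bar> < vmax" using rho_supp[OF False] by auto
      have vu: "\<bar>v - u\<bar> \<le> L" using v assms unfolding L_def by linarith
      have xu: "\<bar>x - u\<bar> \<le> g * L" unfolding x_def using vu assms by (simp add: abs_mult mult_left_mono)
      have x3: "\<bar>x\<bar> \<le> 3 * Vb" using xu assms by linarith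
      note rf = refl_facts[OF Vb_pos x3]
      have fr: "fn n (refl_state Vb x) = (refl_state Vb x) ^ n" using rf(1) by (rule fn_id)
      have "(refl_state Vb x) ^ n \<le> x ^ n"
      proof -
        have "\<bar>refl_state Vb x\<bar> ^ n \<le> \<bar>x\<bar> ^ n" using rf(2) by (intro power_mono) auto
        then show ?thesis using assms(4) by (simp add: power_even_abs)
      qed
      moreover have "(v - u) * rho v \<ge> 0"
      proof -
        from rho_cases[of v] show ?thesis
        proof
          assume h: "rho v = wp v \<and> wm v = 0"
          then have "v > vmin" using False wp_supp[of v] by auto
          then show ?thesis using h wp_nn[of v] assms Vb_small by simp
        next
          assume h: "rho v = - wm v \<and> wp v = 0"
          then have "v < - vmin" using False wm_supp[of v] by auto
          then have "(u - v) * wm v \<ge> 0" using wm_nn[of v] assms Vb_small by simp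
          then show ?thesis using h by (simp add: algebra_simps)
        qed
      qed
      ultimately have "((refl_state Vb x) ^ n - x ^ n) * ((v - u) * rho v) \<le> 0"
        by (simp add: mult_nonpos_nonneg)
      then show ?thesis unfolding x_def[symmetric] fr by (simp add: mult_ac)
    qed simp
  qed simp
  then show ?thesis by simp
qed


lemma Kint: "integrable lborel (\<lambda>v. c * ((v - u) ^ k * rho v))"
  by (rule cont_int_rho[where g="\<lambda>v. c * (v - u) ^ k", simplified mult.assoc]) (intro continuous_intros)

lemma P1: "P g 1 u = g * K 2 u"
proof -
  have "P g 1 u = (\<integral>v. g * ((v - u) ^ 2 * rho v) \<partial>lborel)"
    unfolding P_def by (rule Bochner_Integration.integral_cong) (simp_all add: algebra_simps power2_eq_square)
  then show ?thesis by (simp add: K_def)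
qed

lemma P2: "P g 2 u = 2 * g * u * K 2 u + g ^ 2 * K 3 u"
proof -
  have "P g 2 u = (\<integral>v. (2 * g * u) * ((v - u) ^ 2 * rho v) + g ^ 2 * ((v - u) ^ 3 * rho v) \<partial>lborel)"
    unfolding P_def by (rule Bochner_Integration.integral_cong) (simp_all add: algebra_simps power2_eq_square power3_eq_cube)
  also have "\<dots> = (2 * g * u) * K 2 u + g ^ 2 * K 3 u"
    unfolding K_def by (subst Bochner_Integration.integral_add[OF Kint Kint]) simp
  finally show ?thesis by simp
qed

lemma P3: "P g 3 u = 3 * g * u ^ 2 * K 2 u + 3 * g ^ 2 * u * K 3 u + g ^ 3 * K 4 u"
proof -
  have "P g 3 u = (\<integral>v. ((3 * g * u ^ 2) * ((v - u) ^ 2 * rho v) + (3 * g ^ 2 * u) * ((v - u) ^ 3 * rho v))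
        + g ^ 3 * ((v - u) ^ 4 * rho v) \<partial>lborel)"
    unfolding P_def by (rule Bochner_Integration.integral_cong) (simp_all add: algebra_simps eval_nat_numeral)
  also have "\<dots> = (3 * g * u ^ 2) * K 2 u + (3 * g ^ 2 * u) * K 3 u + g ^ 3 * K 4 u"
    unfolding K_def
    by (subst Bochner_Integration.integral_add[OF Bochner_Integration.integrable_add[OF Kint Kint] Kint],
        subst Bochner_Integration.integral_add[OF Kint Kint]) simp
  finally show ?thesis by simp
qed

lemma P4: "P g 4 u = 4 * g * u ^ 3 * K 2 u + 6 * g ^ 2 * u ^ 2 * K 3 u + 4 * g ^ 3 * u * K 4 u + g ^ 4 * K 5 u"
proof -
  have "P g 4 u = (\<integral>v. (((4 * g * u ^ 3) * ((v - u) ^ 2 * rho v) + (6 * g ^ 2 * u ^ 2) * ((v - u) ^ 3 * rho v))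
        + (4 * g ^ 3 * u) * ((v - u) ^ 4 * rho v)) + g ^ 4 * ((v - u) ^ 5 * rho v) \<partial>lborel)"
    unfolding P_def by (rule Bochner_Integration.integral_cong) (simp_all add: algebra_simps eval_nat_numeral)
  also have "\<dots> = (4 * g * u ^ 3) * K 2 u + (6 * g ^ 2 * u ^ 2) * K 3 u + (4 * g ^ 3 * u) * K 4 u + g ^ 4 * K 5 u"
    unfolding K_def
    by (subst Bochner_Integration.integral_add[OF Bochner_Integration.integrable_add[OF Bochner_Integration.integrable_add[OF Kint Kint] Kint] Kint],
        subst Bochner_Integration.integral_add[OF Bochner_Integration.integrable_add[OF Kint Kint] Kint],
        subst Bochner_Integration.integral_add[OF Kint Kint]) simp
  finally show ?thesis by simp
qed


lemma Q2z: "Q 2 = 0" using Q2_zero unfolding Q_def .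

lemma Q0_odd: "\<bar>u\<bar> \<le> Vb \<Longrightarrow> even k \<Longrightarrow> Q 0 * u ^ Suc k \<le> Q 1 / 3 * u ^ k"
proof -
  assume u: "\<bar>u\<bar> \<le> Vb" and k: "even k"
  have "Q 0 * u \<le> \<bar>Q 0\<bar> * \<bar>u\<bar>" by (metis abs_ge_self abs_mult)
  also have "\<dots> \<le> \<bar>Q 0\<bar> * Vb" using u by (intro mult_left_mono) auto
  also have "\<dots> \<le> Q 1 / 3" by (rule Q0_Vb)
  finally have "Q 0 * u * u ^ k \<le> Q 1 / 3 * u ^ k" using k by (intro mult_right_mono) auto
  then show ?thesis by (simp add: mult_ac)
qed

lemma absle_mult: "\<bar>x\<bar> \<le> B \<Longrightarrow> (c::real) \<ge> 0 \<Longrightarrow> c * x \<le> c * B"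
  by (intro mult_left_mono) auto

lemma g_facts: assumes "0 < m" "m < M" "gam M m * L \<le> Vb / 2"
  shows "0 < gam M m" "gam M m \<le> 1" "gam M m \<le> 2 * (m / M)" "\<bar>gam M m - 2 * (m / M)\<bar> \<le> 2 * (m / M) ^ 2"
proof -
  show g0: "0 < gam M m" unfolding gam_def using assms by simp
  have "L \<ge> Vb" unfolding L_def using vmin_pos vmin_less by simp
  then have "gam M m * Vb \<le> gam M m * L" using g0 by (intro mult_left_mono) auto
  then have "gam M m * Vb \<le> 1 * Vb" using assms(3) Vb_pos by linarith
  then show "gam M m \<le> 1" using Vb_pos by (rule mult_right_le_imp_le)
  show "gam M m \<le> 2 * (m / M)" unfolding gam_def using assms by (simp add: field_simps)
  have "gam M m - 2 * (m / M) = - 2 * m ^ 2 / (M * (M + m))"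
    unfolding gam_def using assms by (simp add: field_simps power2_eq_square)
  moreover have "2 * m ^ 2 / (M * (M + m)) \<le> 2 * m ^ 2 / (M * M)"
    using assms by (intro frac_le) (auto simp: mult_left_mono)
  moreover have "2 * m ^ 2 / (M * M) = 2 * (m / M) ^ 2" by (simp add: power2_eq_square)
  ultimately show "\<bar>gam M m - 2 * (m / M)\<bar> \<le> 2 * (m / M) ^ 2" using assms by simp
qed

context
  fixes M m u
  assumes mM: "0 < m" "m < M" and gL: "gam M m * L \<le> Vb / 2" and u: "\<bar>u\<bar> < Vb"
begin

lemma J2a: "jump_gen pm pp M m Vb (fn 2) u \<le> - (10 / 3) * gam M m * Q 1 * u ^ 2 + (gam M m) ^ 2 * (L ^ 3 * S)"
proof -
  let ?g = "gam M m"
  have g: "0 < ?g" using g_facts[OF mM gL] by simp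
  have "jump_gen pm pp M m Vb (fn 2) u = P ?g 2 u + Dp ?g 2 u" by (rule jump_decomp[OF mM u])
  also have "\<dots> \<le> P ?g 2 u" using Dp_nonpos[OF g gL u] by simp
  also have "\<dots> = 2 * ?g * (Q 0 * u ^ 3) - 4 * ?g * Q 1 * u ^ 2 + ?g ^ 2 * K 3 u"
    unfolding P2 K2 Q2z by (simp add: algebra_simps eval_nat_numeral)
  also have "\<dots> \<le> 2 * ?g * (Q 1 / 3 * u ^ 2) - 4 * ?g * Q 1 * u ^ 2 + ?g ^ 2 * (L ^ 3 * S)"
  proof -
    have "Q 0 * u ^ Suc 2 \<le> Q 1 / 3 * u ^ 2" using u by (intro Q0_odd) auto
    then have a: "2 * ?g * (Q 0 * u ^ 3) \<le> 2 * ?g * (Q 1 / 3 * u ^ 2)" using g by (intro mult_left_mono) auto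
    have "\<bar>K 3 u\<bar> \<le> L ^ 3 * S" using u by (intro K_bound) simp
    from absle_mult[OF this, of "?g ^ 2"] have b: "?g ^ 2 * K 3 u \<le> ?g ^ 2 * (L ^ 3 * S)" by simp
    from a b show ?thesis by linarith
  qed
  also have "\<dots> = - (10 / 3) * ?g * Q 1 * u ^ 2 + ?g ^ 2 * (L ^ 3 * S)" by (simp add: algebra_simps)
  finally show ?thesis .
qed


lemma J4a: "jump_gen pm pp M m Vb (fn 4) u \<le> - (20 / 3) * gam M m * Q 1 * u ^ 4 + 6 * (gam M m) ^ 2 * (L ^ 3 * S) * u ^ 2
   + 4 * (gam M m) ^ 3 * (Vb * (L ^ 4 * S)) + (gam M m) ^ 4 * (L ^ 5 * S)"
proof -
  let ?g = "gam M m"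
  have g: "0 < ?g" using g_facts[OF mM gL] by simp
  have "jump_gen pm pp M m Vb (fn 4) u = P ?g 4 u + Dp ?g 4 u" by (rule jump_decomp[OF mM u])
  also have "\<dots> \<le> P ?g 4 u" using Dp_nonpos[OF g gL u] by simp
  also have "\<dots> = 4 * ?g * (Q 0 * u ^ 5) - 8 * ?g * Q 1 * u ^ 4 + (6 * ?g ^ 2 * u ^ 2) * K 3 u
      + 4 * ?g ^ 3 * (u * K 4 u) + ?g ^ 4 * K 5 u"
    unfolding P4 K2 Q2z by (simp add: algebra_simps eval_nat_numeral)
  also have "\<dots> \<le> 4 * ?g * (Q 1 / 3 * u ^ 4) - 8 * ?g * Q 1 * u ^ 4 + (6 * ?g ^ 2 * u ^ 2) * (L ^ 3 * S)
      + 4 * ?g ^ 3 * (Vb * (L ^ 4 * S)) + ?g ^ 4 * (L ^ 5 * S)"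
  proof -
    have "Q 0 * u ^ Suc 4 \<le> Q 1 / 3 * u ^ 4" using u by (intro Q0_odd) auto
    then have a: "4 * ?g * (Q 0 * u ^ 5) \<le> 4 * ?g * (Q 1 / 3 * u ^ 4)" using g by (intro mult_left_mono) auto
    have "\<bar>K 3 u\<bar> \<le> L ^ 3 * S" using u by (intro K_bound) simp
    from absle_mult[OF this, of "6 * ?g ^ 2 * u ^ 2"] have b: "(6 * ?g ^ 2 * u ^ 2) * K 3 u \<le> (6 * ?g ^ 2 * u ^ 2) * (L ^ 3 * S)" by simp
    have "\<bar>K 4 u\<bar> \<le> L ^ 4 * S" using u by (intro K_bound) simp
    then have "\<bar>u * K 4 u\<bar> \<le> Vb * (L ^ 4 * S)" unfolding abs_mult using u by (intro mult_mono) auto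
    from absle_mult[OF this, of "4 * ?g ^ 3"] g have c: "4 * ?g ^ 3 * (u * K 4 u) \<le> 4 * ?g ^ 3 * (Vb * (L ^ 4 * S))" by simp
    have "\<bar>K 5 u\<bar> \<le> L ^ 5 * S" using u by (intro K_bound) simp
    from absle_mult[OF this, of "?g ^ 4"] have d: "?g ^ 4 * K 5 u \<le> ?g ^ 4 * (L ^ 5 * S)" by simp
    from a b c d show ?thesis by linarith
  qed
  also have "\<dots> = - (20 / 3) * ?g * Q 1 * u ^ 4 + 6 * ?g ^ 2 * (L ^ 3 * S) * u ^ 2
   + 4 * ?g ^ 3 * (Vb * (L ^ 4 * S)) + ?g ^ 4 * (L ^ 5 * S)" by (simp add: algebra_simps)
  finally show ?thesis .
qed

lemma J1: "\<bar>jump_gen pm pp M m Vb (fn 1) u - gam M m * (Q 0 * u ^ 2 - 2 * Q 1 * u)\<bar> \<le> cD 1 * gam M m * u ^ 4"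
proof -
  let ?g = "gam M m"
  have g: "0 < ?g" using g_facts[OF mM gL] by simp
  have "jump_gen pm pp M m Vb (fn 1) u - ?g * (Q 0 * u ^ 2 - 2 * Q 1 * u) = Dp ?g 1 u"
    unfolding jump_decomp[OF mM u] P1 K2 Q2z by (simp add: algebra_simps)
  then show ?thesis using Dp_bound[OF g gL u, of 1] by simp
qed

lemma J3: "\<bar>jump_gen pm pp M m Vb (fn 3) u - 3 * gam M m * (Q 0 * u ^ 4 - 2 * Q 1 * u ^ 3)
    - 3 * (gam M m) ^ 2 * (Q 3 * u + 3 * Q 1 * u ^ 3 - Q 0 * u ^ 4)\<bar> \<le> cD 3 * gam M m * u ^ 4 + (gam M m) ^ 3 * (L ^ 4 * S)"
proof -
  let ?g = "gam M m"
  have g: "0 < ?g" using g_facts[OF mM gL] by simp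
  have "jump_gen pm pp M m Vb (fn 3) u - 3 * ?g * (Q 0 * u ^ 4 - 2 * Q 1 * u ^ 3)
    - 3 * ?g ^ 2 * (Q 3 * u + 3 * Q 1 * u ^ 3 - Q 0 * u ^ 4) = Dp ?g 3 u + ?g ^ 3 * K 4 u"
    unfolding jump_decomp[OF mM u] P3 K2 K3 Q2z by (simp add: algebra_simps eval_nat_numeral)
  moreover have "\<bar>K 4 u\<bar> \<le> L ^ 4 * S" using u by (intro K_bound) simp
  then have "\<bar>?g ^ 3 * K 4 u\<bar> \<le> ?g ^ 3 * (L ^ 4 * S)" using g unfolding abs_mult by (simp add: mult_left_mono)
  ultimately show ?thesis using Dp_bound[OF g gL u, of 3] by linarith
qed

lemma J2b: "\<bar>jump_gen pm pp M m Vb (fn 2) u - 2 * gam M m * (Q 0 * u ^ 3 - 2 * Q 1 * u ^ 2)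
    - (gam M m) ^ 2 * (Q 3 + 3 * Q 1 * u ^ 2 - Q 0 * u ^ 3)\<bar> \<le> cD 2 * gam M m * u ^ 4"
proof -
  let ?g = "gam M m"
  have g: "0 < ?g" using g_facts[OF mM gL] by simp
  have "jump_gen pm pp M m Vb (fn 2) u - 2 * ?g * (Q 0 * u ^ 3 - 2 * Q 1 * u ^ 2)
    - ?g ^ 2 * (Q 3 + 3 * Q 1 * u ^ 2 - Q 0 * u ^ 3) = Dp ?g 2 u"
    unfolding jump_decomp[OF mM u] P2 K2 K3 Q2z by (simp add: algebra_simps eval_nat_numeral)
  then show ?thesis using Dp_bound[OF g gL u, of 2] by simp
qed

end




lemma S0_jump: assumes "S = 0" "f \<in> borel_measurable borel" "bounded (range f)"
  shows "jump_gen pm pp M m Vb f u = 0"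
proof -
  obtain B where B: "\<And>x. \<bar>f x\<bar> \<le> B" using assms(3) unfolding bounded_iff by auto
  have "AE v in lborel. \<bar>rho v\<bar> = 0"
    using integral_nonneg_eq_0_iff_AE[of lborel "\<lambda>v. \<bar>rho v\<bar>"] rho_int assms(1) unfolding S_def by auto
  then have "AE v in lborel. (v - u) * (f (refl_state Vb (post_coll M m u v)) - f u) * rho v = 0"
    by (rule AE_mp) (auto intro!: AE_I2)
  then show ?thesis unfolding jump_conv[OF assms(2) B] by (rule integral_eq_zero_AE)
qed

lemma S0_stat: assumes "S = 0" "\<bar>x\<bar> < Vb"
  shows "stationary_dist pm pp M m Vb (return borel x)"
  unfolding stationary_dist_def
proof (intro conjI allI impI)
  show "sets (return borel x) = sets borel" by simp
  show "prob_space (return borel x)" by (rule prob_space_return) simp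
  show "emeasure (return borel x) {- Vb<..<Vb} = 1" using assms(2) by (auto simp: indicator_def)
  fix f :: "real \<Rightarrow> real" assume f: "f \<in> borel_measurable borel \<and> bounded (range f)"
  then have "jump_gen pm pp M m Vb f = (\<lambda>u. 0)" using S0_jump[OF assms(1)] by auto
  then show "integrable (return borel x) (jump_gen pm pp M m Vb f)"
    "integral\<^sup>L (return borel x) (jump_gen pm pp M m Vb f) = 0" by simp_all
qed

lemma returns_differ: "return borel (0::real) \<noteq> return borel (Vb / 2)"
proof
  assume "return borel (0::real) = return borel (Vb / 2)"
  then have "emeasure (return borel (0::real)) {0} = emeasure (return borel (Vb / 2)) {0}" by simp
  then show False using Vb_pos by simp
qed

definition "A2 = L ^ 3 * S / Q 1"
definition "A4 = (6 * L ^ 3 * S * A2 + 4 * Vb * L ^ 4 * S + L ^ 5 * S) / Q 1"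
definition "A1 = (\<bar>Q 0\<bar> * A2 + cD 1 * A4) / (2 * Q 1)"
definition "A3 = (2 * \<bar>Q 0\<bar> * A4 + \<bar>Q 3\<bar> * A1 + 3 * Q 1 * Vb * A2 + (cD 3 * A4 + L ^ 4 * S) / 3) / (2 * Q 1)"
definition "B2 = (3 * \<bar>Q 0\<bar> * A3 + 3 * Q 1 * A2 + cD 2 * A4) / (4 * Q 1)"
definition "B1 = cD 1 * A4 / (2 * Q 1)"

lemma L_pos: "L > 0" unfolding L_def using Vb_pos vmin_pos vmin_less by simp
lemma cD_nn: "cD n \<ge> 0" unfolding cD_def using L_pos Vb_pos S_nn by simp
lemma A_nn: "S > 0 \<Longrightarrow> A2 \<ge> 0 \<and> A4 \<ge> 0 \<and> A1 \<ge> 0"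
  using Q1_pos L_pos S_nn Vb_pos cD_nn unfolding A2_def A4_def A1_def by simp

context
  fixes M m \<mu>
  assumes mM2: "0 < m" "m < M" and gL2: "gam M m * L \<le> Vb / 2"
    and st: "stationary_dist pm pp M m Vb \<mu>"
begin

lemma mu_sets: "sets \<mu> = sets borel" using st unfolding stationary_dist_def by blast
lemma mu_prob: "prob_space \<mu>" using st unfolding stationary_dist_def by blast
lemma mu_fin: "finite_measure \<mu>" using mu_prob by (rule prob_space.finite_measure)

lemma mu_AE: "AE u in \<mu>. \<bar>u\<bar> < Vb"
proof -
  have e: "emeasure \<mu> {- Vb<..<Vb} = 1" using st unfolding stationary_dist_def by blast
  have A: "{- Vb<..<Vb} \<in> sets \<mu>" using mu_sets by simp
  have "ennreal (measure \<mu> {- Vb<..<Vb}) = 1"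
    using e finite_measure.emeasure_eq_measure[OF mu_fin] by metis
  then have "measure \<mu> {- Vb<..<Vb} = 1" by simp
  then have "AE u in \<mu>. u \<in> {- Vb<..<Vb}" using prob_space.AE_in_set_eq_1[OF mu_prob A] by simp
  then show ?thesis by (rule AE_mp) (auto intro!: AE_I2)
qed

lemma mu_meas: "h \<in> borel_measurable borel \<Longrightarrow> h \<in> borel_measurable \<mu>"
  using measurable_cong_sets[OF mu_sets refl] by blast

lemma int_cont: "continuous_on UNIV h \<Longrightarrow> integrable \<mu> (h :: real \<Rightarrow> real)"
proof -
  assume c: "continuous_on UNIV h"
  have "compact (h ` cball 0 Vb)"
    by (rule compact_continuous_image) (auto intro: continuous_on_subset[OF c])
  then obtain B where B: "\<And>x. x \<in> h ` cball 0 Vb \<Longrightarrow> norm x \<le> B"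
    using compact_imp_bounded bounded_iff by metis
  show ?thesis
  proof (rule finite_measure.integrable_const_bound[OF mu_fin])
    show "AE x in \<mu>. norm (h x) \<le> B"
    proof (rule AE_mp[OF mu_AE], rule AE_I2, rule impI)
      fix x :: real assume "\<bar>x\<bar> < Vb"
      then have "h x \<in> h ` cball 0 Vb" by auto
      then show "norm (h x) \<le> B" by (rule B)
    qed
    show "h \<in> borel_measurable \<mu>" by (rule mu_meas) (rule borel_measurable_continuous_onI[OF c])
  qed
qed

lemma Jn: "integrable \<mu> (jump_gen pm pp M m Vb (fn n)) \<and> integral\<^sup>L \<mu> (jump_gen pm pp M m Vb (fn n)) = 0"
proof -
  have "bounded (range (fn n))" unfolding bounded_iff using fn_bound by auto
  then show ?thesis using st fn_meas unfolding stationary_dist_def by blast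
qed

definition "X k = (\<integral>u. u ^ k \<partial>\<mu>)"

lemma poly_int:
  assumes "\<And>u. f u = c0 + c1 * u + c2 * u ^ 2 + c3 * u ^ 3 + c4 * u ^ 4"
  shows "integral\<^sup>L \<mu> f = c0 + c1 * X 1 + c2 * X 2 + c3 * X 3 + c4 * X 4"
proof -
  have f: "f = (\<lambda>u. (((c0 + c1 * u) + c2 * u ^ 2) + c3 * u ^ 3) + c4 * u ^ 4)" using assms by auto
  have i: "\<And>c k. integrable \<mu> (\<lambda>u::real. c * u ^ k)" by (rule int_cont) (intro continuous_intros)
  have i0: "integrable \<mu> (\<lambda>u::real. c0)" by (rule int_cont) (intro continuous_intros)
  have i1: "integrable \<mu> (\<lambda>u::real. c1 * u)" by (rule int_cont) (intro continuous_intros)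
  have a1: "integrable \<mu> (\<lambda>u::real. c0 + c1 * u)" by (rule Bochner_Integration.integrable_add[OF i0 i1])
  have a2: "integrable \<mu> (\<lambda>u::real. (c0 + c1 * u) + c2 * u ^ 2)" by (rule Bochner_Integration.integrable_add[OF a1 i])
  have a3: "integrable \<mu> (\<lambda>u::real. ((c0 + c1 * u) + c2 * u ^ 2) + c3 * u ^ 3)" by (rule Bochner_Integration.integrable_add[OF a2 i])
  have "integral\<^sup>L \<mu> f = (\<integral>u. ((c0 + c1 * u) + c2 * u ^ 2) + c3 * u ^ 3 \<partial>\<mu>) + (\<integral>u. c4 * u ^ 4 \<partial>\<mu>)"
    unfolding f by (rule Bochner_Integration.integral_add[OF a3 i])
  also have "(\<integral>u. ((c0 + c1 * u) + c2 * u ^ 2) + c3 * u ^ 3 \<partial>\<mu>) = (\<integral>u. (c0 + c1 * u) + c2 * u ^ 2 \<partial>\<mu>) + (\<integral>u. c3 * u ^ 3 \<partial>\<mu>)"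
    by (rule Bochner_Integration.integral_add[OF a2 i])
  also have "(\<integral>u. (c0 + c1 * u) + c2 * u ^ 2 \<partial>\<mu>) = (\<integral>u. c0 + c1 * u \<partial>\<mu>) + (\<integral>u. c2 * u ^ 2 \<partial>\<mu>)"
    by (rule Bochner_Integration.integral_add[OF a1 i])
  also have "(\<integral>u. c0 + c1 * u \<partial>\<mu>) = (\<integral>u. c0 \<partial>\<mu>) + (\<integral>u. c1 * u \<partial>\<mu>)"
    by (rule Bochner_Integration.integral_add[OF i0 i1])
  also have "(\<integral>u. c0 \<partial>\<mu>) = c0" using prob_space.prob_space[OF mu_prob] by simp
  finally show ?thesis unfolding X_def by simp
qed

lemma int_le:
  assumes "\<And>u. \<bar>u\<bar> < Vb \<Longrightarrow> jump_gen pm pp M m Vb (fn n) u \<le> h u" "continuous_on UNIV h"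
  shows "0 \<le> integral\<^sup>L \<mu> h"
proof -
  have "integral\<^sup>L \<mu> (jump_gen pm pp M m Vb (fn n)) \<le> integral\<^sup>L \<mu> h"
  proof (rule integral_mono_AE)
    show "integrable \<mu> (jump_gen pm pp M m Vb (fn n))" using Jn by blast
    show "integrable \<mu> h" by (rule int_cont[OF assms(2)])
    show "AE x in \<mu>. jump_gen pm pp M m Vb (fn n) x \<le> h x"
      by (rule AE_mp[OF mu_AE], rule AE_I2, rule impI, rule assms(1))
  qed
  then show ?thesis using Jn by simp
qed

lemma int_abs:
  assumes "\<And>u. \<bar>u\<bar> < Vb \<Longrightarrow> \<bar>jump_gen pm pp M m Vb (fn n) u - h u\<bar> \<le> b u"
    "continuous_on UNIV h" "continuous_on UNIV b"
  shows "\<bar>integral\<^sup>L \<mu> h\<bar> \<le> integral\<^sup>L \<mu> b"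
proof -
  have iJ: "integrable \<mu> (jump_gen pm pp M m Vb (fn n))" using Jn by blast
  have ih: "integrable \<mu> h" by (rule int_cont[OF assms(2)])
  have ib: "integrable \<mu> b" by (rule int_cont[OF assms(3)])
  have eq: "integral\<^sup>L \<mu> (jump_gen pm pp M m Vb (fn n)) - integral\<^sup>L \<mu> h
      = (\<integral>u. jump_gen pm pp M m Vb (fn n) u - h u \<partial>\<mu>)"
    by (rule Bochner_Integration.integral_diff[OF iJ ih, symmetric])
  have le1: "\<bar>\<integral>u. jump_gen pm pp M m Vb (fn n) u - h u \<partial>\<mu>\<bar> \<le> (\<integral>u. \<bar>jump_gen pm pp M m Vb (fn n) u - h u\<bar> \<partial>\<mu>)"
    by (rule integral_abs_bound)
  have le2: "(\<integral>u. \<bar>jump_gen pm pp M m Vb (fn n) u - h u\<bar> \<partial>\<mu>) \<le> integral\<^sup>L \<mu> b"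
  proof (rule integral_mono_AE)
    show "integrable \<mu> (\<lambda>u. \<bar>jump_gen pm pp M m Vb (fn n) u - h u\<bar>)" by (intro integrable_abs Bochner_Integration.integrable_diff iJ ih)
    show "integrable \<mu> b" by (rule ib)
    show "AE x in \<mu>. \<bar>jump_gen pm pp M m Vb (fn n) x - h x\<bar> \<le> b x"
      by (rule AE_mp[OF mu_AE], rule AE_I2, rule impI, rule assms(1))
  qed
  have J0: "integral\<^sup>L \<mu> (jump_gen pm pp M m Vb (fn n)) = 0" using Jn by blast
  have "\<bar>integral\<^sup>L \<mu> h\<bar> = \<bar>\<integral>u. jump_gen pm pp M m Vb (fn n) u - h u \<partial>\<mu>\<bar>"
    using eq J0 by (metis abs_minus_cancel diff_0)
  then show ?thesis using le1 le2 by linarith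
qed


lemma X2_nn: "X 2 \<ge> 0" unfolding X_def by (rule integral_nonneg_AE) simp
lemma X4_nn: "X 4 \<ge> 0" unfolding X_def
  by (rule integral_nonneg_AE) (simp add: zero_le_even_power)

lemma X3_le: "\<bar>X 3\<bar> \<le> Vb * X 2"
proof -
  have "\<bar>X 3\<bar> \<le> (\<integral>u. \<bar>u ^ 3\<bar> \<partial>\<mu>)" unfolding X_def by (rule integral_abs_bound)
  also have "\<dots> \<le> (\<integral>u. Vb * u ^ 2 \<partial>\<mu>)"
  proof (rule integral_mono_AE)
    show "integrable \<mu> (\<lambda>u::real. \<bar>u ^ 3\<bar>)" by (rule int_cont) (intro continuous_intros)
    show "integrable \<mu> (\<lambda>u::real. Vb * u ^ 2)" by (rule int_cont) (intro continuous_intros)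
    show "AE x in \<mu>. \<bar>x ^ 3\<bar> \<le> Vb * x ^ 2"
    proof (rule AE_mp[OF mu_AE], rule AE_I2, rule impI)
      fix x :: real assume "\<bar>x\<bar> < Vb"
      then have "\<bar>x\<bar> * x ^ 2 \<le> Vb * x ^ 2" by (intro mult_right_mono) auto
      then show "\<bar>x ^ 3\<bar> \<le> Vb * x ^ 2" by (simp add: abs_mult power_abs power2_eq_square power3_eq_cube)
    qed
  qed
  also have "\<dots> = Vb * X 2" unfolding X_def by simp
  finally show ?thesis .
qed

lemma s2: "0 \<le> (gam M m) ^ 2 * (L ^ 3 * S) - (10 / 3) * gam M m * Q 1 * X 2"
proof -
  have "0 \<le> integral\<^sup>L \<mu> (\<lambda>u. - (10 / 3) * gam M m * Q 1 * u ^ 2 + (gam M m) ^ 2 * (L ^ 3 * S))"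
  proof (rule int_le[where n=2])
    show "\<And>u. \<bar>u\<bar> < Vb \<Longrightarrow> jump_gen pm pp M m Vb (fn 2) u \<le> - (10 / 3) * gam M m * Q 1 * u ^ 2 + (gam M m) ^ 2 * (L ^ 3 * S)"
      by (rule J2a[OF mM2 gL2])
  qed (intro continuous_intros)
  also have "\<dots> = (gam M m) ^ 2 * (L ^ 3 * S) + 0 * X 1 + (- (10 / 3) * gam M m * Q 1) * X 2 + 0 * X 3 + 0 * X 4"
    by (rule poly_int) (simp add: algebra_simps)
  finally show ?thesis by simp
qed

lemma s4: "0 \<le> 4 * (gam M m) ^ 3 * (Vb * (L ^ 4 * S)) + (gam M m) ^ 4 * (L ^ 5 * S)
   + 6 * (gam M m) ^ 2 * (L ^ 3 * S) * X 2 - (20 / 3) * gam M m * Q 1 * X 4"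
proof -
  have "0 \<le> integral\<^sup>L \<mu> (\<lambda>u. - (20 / 3) * gam M m * Q 1 * u ^ 4 + 6 * (gam M m) ^ 2 * (L ^ 3 * S) * u ^ 2
   + 4 * (gam M m) ^ 3 * (Vb * (L ^ 4 * S)) + (gam M m) ^ 4 * (L ^ 5 * S))"
  proof (rule int_le[where n=4])
    show "\<And>u. \<bar>u\<bar> < Vb \<Longrightarrow> jump_gen pm pp M m Vb (fn 4) u \<le> - (20 / 3) * gam M m * Q 1 * u ^ 4 + 6 * (gam M m) ^ 2 * (L ^ 3 * S) * u ^ 2
   + 4 * (gam M m) ^ 3 * (Vb * (L ^ 4 * S)) + (gam M m) ^ 4 * (L ^ 5 * S)"
      by (rule J4a[OF mM2 gL2])
  qed (intro continuous_intros)
  also have "\<dots> = (4 * (gam M m) ^ 3 * (Vb * (L ^ 4 * S)) + (gam M m) ^ 4 * (L ^ 5 * S)) + 0 * X 1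
      + (6 * (gam M m) ^ 2 * (L ^ 3 * S)) * X 2 + 0 * X 3 + (- (20 / 3) * gam M m * Q 1) * X 4"
    by (rule poly_int) (simp add: algebra_simps)
  finally show ?thesis by simp
qed

lemma s1: "\<bar>gam M m * Q 0 * X 2 - 2 * gam M m * Q 1 * X 1\<bar> \<le> cD 1 * gam M m * X 4"
proof -
  have A: "\<bar>integral\<^sup>L \<mu> (\<lambda>u. gam M m * (Q 0 * u ^ 2 - 2 * Q 1 * u))\<bar> \<le> integral\<^sup>L \<mu> (\<lambda>u. cD 1 * gam M m * u ^ 4)"
  proof (rule int_abs[where n=1])
    show "\<And>u. \<bar>u\<bar> < Vb \<Longrightarrow> \<bar>jump_gen pm pp M m Vb (fn 1) u - gam M m * (Q 0 * u ^ 2 - 2 * Q 1 * u)\<bar> \<le> cD 1 * gam M m * u ^ 4"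
      by (rule J1[OF mM2 gL2])
  qed (intro continuous_intros)+
  have e1: "integral\<^sup>L \<mu> (\<lambda>u. gam M m * (Q 0 * u ^ 2 - 2 * Q 1 * u)) = 0 + (- 2 * gam M m * Q 1) * X 1 + (gam M m * Q 0) * X 2 + 0 * X 3 + 0 * X 4"
    by (rule poly_int) (simp add: algebra_simps)
  have e2: "integral\<^sup>L \<mu> (\<lambda>u. cD 1 * gam M m * u ^ 4) = 0 + 0 * X 1 + 0 * X 2 + 0 * X 3 + (cD 1 * gam M m) * X 4"
    by (rule poly_int) simp
  show ?thesis using A unfolding e1 e2 by (simp add: algebra_simps)
qed

lemma s3: "\<bar>3 * gam M m * (Q 0 * X 4 - 2 * Q 1 * X 3) + 3 * (gam M m) ^ 2 * (Q 3 * X 1 + 3 * Q 1 * X 3 - Q 0 * X 4)\<bar>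
    \<le> cD 3 * gam M m * X 4 + (gam M m) ^ 3 * (L ^ 4 * S)"
proof -
  have "\<bar>integral\<^sup>L \<mu> (\<lambda>u. 3 * gam M m * (Q 0 * u ^ 4 - 2 * Q 1 * u ^ 3) + 3 * (gam M m) ^ 2 * (Q 3 * u + 3 * Q 1 * u ^ 3 - Q 0 * u ^ 4))\<bar>
     \<le> integral\<^sup>L \<mu> (\<lambda>u. cD 3 * gam M m * u ^ 4 + (gam M m) ^ 3 * (L ^ 4 * S))"
  proof (rule int_abs[where n=3])
    fix u :: real assume "\<bar>u\<bar> < Vb"
    from J3[OF mM2 gL2 this] show "\<bar>jump_gen pm pp M m Vb (fn 3) u - (3 * gam M m * (Q 0 * u ^ 4 - 2 * Q 1 * u ^ 3) + 3 * (gam M m) ^ 2 * (Q 3 * u + 3 * Q 1 * u ^ 3 - Q 0 * u ^ 4))\<bar>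
     \<le> cD 3 * gam M m * u ^ 4 + (gam M m) ^ 3 * (L ^ 4 * S)" by (simp only: diff_diff_eq)
  qed (intro continuous_intros)+
  moreover have "integral\<^sup>L \<mu> (\<lambda>u. 3 * gam M m * (Q 0 * u ^ 4 - 2 * Q 1 * u ^ 3) + 3 * (gam M m) ^ 2 * (Q 3 * u + 3 * Q 1 * u ^ 3 - Q 0 * u ^ 4))
     = 0 + (3 * (gam M m) ^ 2 * Q 3) * X 1 + 0 * X 2 + (- 6 * gam M m * Q 1 + 9 * (gam M m) ^ 2 * Q 1) * X 3
       + (3 * gam M m * Q 0 - 3 * (gam M m) ^ 2 * Q 0) * X 4"
    by (rule poly_int) (simp add: algebra_simps)
  moreover have "integral\<^sup>L \<mu> (\<lambda>u. cD 3 * gam M m * u ^ 4 + (gam M m) ^ 3 * (L ^ 4 * S))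
      = (gam M m) ^ 3 * (L ^ 4 * S) + 0 * X 1 + 0 * X 2 + 0 * X 3 + (cD 3 * gam M m) * X 4"
    by (rule poly_int) simp
  ultimately show ?thesis by (simp add: algebra_simps)
qed

lemma s2b: "\<bar>2 * gam M m * (Q 0 * X 3 - 2 * Q 1 * X 2) + (gam M m) ^ 2 * (Q 3 + 3 * Q 1 * X 2 - Q 0 * X 3)\<bar>
    \<le> cD 2 * gam M m * X 4"
proof -
  have A: "\<bar>integral\<^sup>L \<mu> (\<lambda>u. 2 * gam M m * (Q 0 * u ^ 3 - 2 * Q 1 * u ^ 2) + (gam M m) ^ 2 * (Q 3 + 3 * Q 1 * u ^ 2 - Q 0 * u ^ 3))\<bar>
     \<le> integral\<^sup>L \<mu> (\<lambda>u. cD 2 * gam M m * u ^ 4)"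
  proof (rule int_abs[where n=2])
    fix u :: real assume "\<bar>u\<bar> < Vb"
    from J2b[OF mM2 gL2 this] show "\<bar>jump_gen pm pp M m Vb (fn 2) u - (2 * gam M m * (Q 0 * u ^ 3 - 2 * Q 1 * u ^ 2) + (gam M m) ^ 2 * (Q 3 + 3 * Q 1 * u ^ 2 - Q 0 * u ^ 3))\<bar>
     \<le> cD 2 * gam M m * u ^ 4" by (simp only: diff_diff_eq)
  qed (intro continuous_intros)+
  have e1: "integral\<^sup>L \<mu> (\<lambda>u. 2 * gam M m * (Q 0 * u ^ 3 - 2 * Q 1 * u ^ 2) + (gam M m) ^ 2 * (Q 3 + 3 * Q 1 * u ^ 2 - Q 0 * u ^ 3))
     = (gam M m) ^ 2 * Q 3 + 0 * X 1 + (- 4 * gam M m * Q 1 + 3 * (gam M m) ^ 2 * Q 1) * X 2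
       + (2 * gam M m * Q 0 - (gam M m) ^ 2 * Q 0) * X 3 + 0 * X 4"
    by (rule poly_int) (simp add: algebra_simps)
  have e2: "integral\<^sup>L \<mu> (\<lambda>u. cD 2 * gam M m * u ^ 4) = 0 + 0 * X 1 + 0 * X 2 + 0 * X 3 + (cD 2 * gam M m) * X 4"
    by (rule poly_int) simp
  show ?thesis using A unfolding e1 e2 by (simp add: algebra_simps)
qed


lemma t2: "S > 0 \<Longrightarrow> X 2 \<le> gam M m * A2"
proof -
  assume S: "S > 0"
  define g where "g = gam M m"
  have g: "0 < g" "g \<le> 1" using g_facts[OF mM2 gL2] unfolding g_def by auto
  have q: "Q 1 > 0" using Q1_pos[OF S] .
  have h: "(10 / 3) * g * Q 1 * X 2 \<le> g ^ 2 * (L ^ 3 * S)" using s2 unfolding g_def by linarith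
  have "0 \<le> g * Q 1 * X 2" using g q X2_nn by simp
  moreover have "(g * A2) * (g * Q 1) = g ^ 2 * (L ^ 3 * S)"
    unfolding A2_def using q by (simp add: power2_eq_square)
  moreover have "X 2 * (g * Q 1) = g * Q 1 * X 2" by (simp add: mult_ac)
  ultimately have "X 2 * (g * Q 1) \<le> (g * A2) * (g * Q 1)" using h by linarith
  then show ?thesis unfolding g_def[symmetric] by (rule mult_right_le_imp_le) (use g q in simp)
qed

lemma t4: "S > 0 \<Longrightarrow> X 4 \<le> (gam M m) ^ 2 * A4"
proof -
  assume S: "S > 0"
  define g where "g = gam M m"
  have g: "0 < g" "g \<le> 1" using g_facts[OF mM2 gL2] unfolding g_def by auto
  have q: "Q 1 > 0" using Q1_pos[OF S] .
  have h: "(20 / 3) * g * Q 1 * X 4 \<le> 4 * g ^ 3 * (Vb * (L ^ 4 * S)) + g ^ 4 * (L ^ 5 * S) + 6 * g ^ 2 * (L ^ 3 * S) * X 2"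
    using s4 unfolding g_def by linarith
  have a: "g ^ 4 * (L ^ 5 * S) \<le> g ^ 3 * (L ^ 5 * S)"
    using g L_pos S_nn by (intro mult_right_mono power_decreasing) auto
  have b: "6 * g ^ 2 * (L ^ 3 * S) * X 2 \<le> 6 * g ^ 2 * (L ^ 3 * S) * (g * A2)"
    using t2[OF S] g L_pos S_nn unfolding g_def by (intro mult_left_mono) auto
  have "0 \<le> g * Q 1 * X 4" using g q X4_nn by simp
  then have "g * Q 1 * X 4 \<le> g ^ 3 * (6 * L ^ 3 * S * A2 + 4 * Vb * L ^ 4 * S + L ^ 5 * S)"
    using h a b by (simp add: algebra_simps power3_eq_cube power2_eq_square)
  moreover have "(g ^ 2 * A4) * (g * Q 1) = g ^ 3 * (6 * L ^ 3 * S * A2 + 4 * Vb * L ^ 4 * S + L ^ 5 * S)"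
    unfolding A4_def using q by (simp add: power3_eq_cube power2_eq_square)
  ultimately have "X 4 * (g * Q 1) \<le> (g ^ 2 * A4) * (g * Q 1)" by (simp add: mult_ac)
  then show ?thesis unfolding g_def[symmetric] by (rule mult_right_le_imp_le) (use g q in simp)
qed

lemma t1: "S > 0 \<Longrightarrow> \<bar>Q 0 * X 2 - 2 * Q 1 * X 1\<bar> \<le> (gam M m) ^ 2 * (2 * Q 1 * B1)"
proof -
  assume S: "S > 0"
  define g where "g = gam M m"
  have g: "0 < g" "g \<le> 1" using g_facts[OF mM2 gL2] unfolding g_def by auto
  have q: "Q 1 > 0" using Q1_pos[OF S] .
  have e: "g * Q 0 * X 2 - 2 * g * Q 1 * X 1 = g * (Q 0 * X 2 - 2 * Q 1 * X 1)" by (simp add: algebra_simps)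
  have "g * \<bar>Q 0 * X 2 - 2 * Q 1 * X 1\<bar> \<le> g * (cD 1 * X 4)"
    using s1 g unfolding g_def[symmetric] e abs_mult by (simp add: mult_ac)
  from this g(1) have "\<bar>Q 0 * X 2 - 2 * Q 1 * X 1\<bar> \<le> cD 1 * X 4" by (rule mult_left_le_imp_le)
  also have "\<dots> \<le> cD 1 * (g ^ 2 * A4)" using t4[OF S] cD_nn unfolding g_def by (intro mult_left_mono) auto
  also have "\<dots> = g ^ 2 * (2 * Q 1 * B1)" unfolding B1_def using q by simp
  finally show ?thesis unfolding g_def .
qed

lemma t1': "S > 0 \<Longrightarrow> \<bar>X 1\<bar> \<le> gam M m * A1"
proof -
  assume S: "S > 0"
  define g where "g = gam M m"
  have g: "0 < g" "g \<le> 1" using g_facts[OF mM2 gL2] unfolding g_def by auto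
  have q: "Q 1 > 0" using Q1_pos[OF S] .
  have "2 * Q 1 * \<bar>X 1\<bar> = \<bar>Q 0 * X 2 - (Q 0 * X 2 - 2 * Q 1 * X 1)\<bar>"
    using q by (simp add: abs_mult)
  also have "\<dots> \<le> \<bar>Q 0 * X 2\<bar> + \<bar>Q 0 * X 2 - 2 * Q 1 * X 1\<bar>" by (rule abs_triangle_ineq4)
  also have "\<dots> \<le> \<bar>Q 0\<bar> * (g * A2) + g ^ 2 * (2 * Q 1 * B1)"
  proof -
    have "\<bar>Q 0 * X 2\<bar> = \<bar>Q 0\<bar> * X 2" using X2_nn by (simp add: abs_mult)
    also have "\<dots> \<le> \<bar>Q 0\<bar> * (g * A2)" using t2[OF S] unfolding g_def[symmetric] by (rule mult_left_mono) simp
    finally show ?thesis using t1[OF S] unfolding g_def[symmetric] by linarith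
  qed
  also have "\<dots> \<le> \<bar>Q 0\<bar> * (g * A2) + g * (2 * Q 1 * B1)"
  proof -
    have "2 * Q 1 * B1 \<ge> 0" using q cD_nn A_nn[OF S] unfolding B1_def by simp
    then have "g ^ 2 * (2 * Q 1 * B1) \<le> g * (2 * Q 1 * B1)"
      using g by (intro mult_right_mono) (auto simp: power2_eq_square)
    then show ?thesis by simp
  qed
  also have "\<dots> = 2 * Q 1 * (g * A1)" unfolding A1_def B1_def using q by (simp add: field_simps)
  finally have "2 * Q 1 * \<bar>X 1\<bar> \<le> 2 * Q 1 * (g * A1)" .
  then show ?thesis unfolding g_def[symmetric] using q by simp
qed


lemma t3: "S > 0 \<Longrightarrow> \<bar>X 3\<bar> \<le> (gam M m) ^ 2 * A3"
proof -
  assume S: "S > 0"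
  define g where "g = gam M m"
  have g: "0 < g" "g \<le> 1" using g_facts[OF mM2 gL2] unfolding g_def by auto
  have q: "Q 1 > 0" using Q1_pos[OF S] .
  have AA: "A2 \<ge> 0" "A4 \<ge> 0" "A1 \<ge> 0" using A_nn[OF S] by auto
  define E where "E = Q 0 * X 4 - 2 * Q 1 * X 3 + g * (Q 3 * X 1 + 3 * Q 1 * X 3 - Q 0 * X 4)"
  have e1: "3 * g * (Q 0 * X 4 - 2 * Q 1 * X 3) + 3 * g ^ 2 * (Q 3 * X 1 + 3 * Q 1 * X 3 - Q 0 * X 4) = g * (3 * E)"
    unfolding E_def by (simp add: algebra_simps power2_eq_square)
  have e2: "cD 3 * g * X 4 + g ^ 3 * (L ^ 4 * S) = g * (cD 3 * X 4 + g ^ 2 * (L ^ 4 * S))"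
    by (simp add: algebra_simps power2_eq_square power3_eq_cube)
  have "g * \<bar>3 * E\<bar> \<le> g * (cD 3 * X 4 + g ^ 2 * (L ^ 4 * S))"
    using s3 unfolding g_def[symmetric] e1 e2 abs_mult using g by simp
  from this g(1) have hE: "\<bar>3 * E\<bar> \<le> cD 3 * X 4 + g ^ 2 * (L ^ 4 * S)" by (rule mult_left_le_imp_le)
  have x4: "X 4 \<le> g ^ 2 * A4" using t4[OF S] unfolding g_def .
  have x1: "\<bar>X 1\<bar> \<le> g * A1" using t1'[OF S] unfolding g_def .
  have x2: "X 2 \<le> g * A2" using t2[OF S] unfolding g_def .
  have b1: "\<bar>E\<bar> \<le> g ^ 2 * ((cD 3 * A4 + L ^ 4 * S) / 3)"
  proof -
    have "cD 3 * X 4 \<le> cD 3 * (g ^ 2 * A4)" using x4 cD_nn by (rule mult_left_mono)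
    moreover have "\<bar>3 * E\<bar> = 3 * \<bar>E\<bar>" by simp
    ultimately have "3 * \<bar>E\<bar> \<le> cD 3 * (g ^ 2 * A4) + g ^ 2 * (L ^ 4 * S)" using hE by linarith
    then show ?thesis by (simp add: field_simps)
  qed
  have b2: "\<bar>Q 0 * X 4\<bar> \<le> g ^ 2 * (\<bar>Q 0\<bar> * A4)"
  proof -
    have "\<bar>Q 0 * X 4\<bar> = \<bar>Q 0\<bar> * X 4" using X4_nn by (simp add: abs_mult)
    also have "\<dots> \<le> \<bar>Q 0\<bar> * (g ^ 2 * A4)" using x4 by (rule mult_left_mono) simp
    finally show ?thesis by (simp add: mult_ac)
  qed
  have b3: "\<bar>g * (Q 3 * X 1)\<bar> \<le> g ^ 2 * (\<bar>Q 3\<bar> * A1)"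
  proof -
    have "\<bar>g * (Q 3 * X 1)\<bar> = g * (\<bar>Q 3\<bar> * \<bar>X 1\<bar>)" using g by (simp add: abs_mult)
    also have "\<dots> \<le> g * (\<bar>Q 3\<bar> * (g * A1))" using x1 g by (intro mult_left_mono) auto
    finally show ?thesis by (simp add: mult_ac power2_eq_square)
  qed
  have b4: "\<bar>3 * g * Q 1 * X 3\<bar> \<le> g ^ 2 * (3 * Q 1 * Vb * A2)"
  proof -
    have "\<bar>3 * g * Q 1 * X 3\<bar> = (3 * g * Q 1) * \<bar>X 3\<bar>" using g q by (simp add: abs_mult)
    also have "\<dots> \<le> (3 * g * Q 1) * (Vb * X 2)" using X3_le g q by (intro mult_left_mono) auto
    also have "\<dots> \<le> (3 * g * Q 1) * (Vb * (g * A2))" using x2 g q Vb_pos by (intro mult_left_mono) auto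
    finally show ?thesis by (simp add: mult_ac power2_eq_square)
  qed
  have b5: "\<bar>g * Q 0 * X 4\<bar> \<le> g ^ 2 * (\<bar>Q 0\<bar> * A4)"
  proof -
    have "\<bar>g * Q 0 * X 4\<bar> = g * \<bar>Q 0 * X 4\<bar>" using g by (simp add: abs_mult)
    also have "\<dots> \<le> 1 * \<bar>Q 0 * X 4\<bar>" using g by (intro mult_right_mono) auto
    finally show ?thesis using b2 by simp
  qed
  have id: "- 2 * Q 1 * X 3 = E - Q 0 * X 4 - g * (Q 3 * X 1) - 3 * g * Q 1 * X 3 + g * Q 0 * X 4"
    unfolding E_def by (simp add: algebra_simps)
  have "\<bar>- 2 * Q 1 * X 3\<bar> \<le> \<bar>E\<bar> + \<bar>Q 0 * X 4\<bar> + \<bar>g * (Q 3 * X 1)\<bar> + \<bar>3 * g * Q 1 * X 3\<bar> + \<bar>g * Q 0 * X 4\<bar>"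
    unfolding id by linarith
  moreover have "\<bar>- 2 * Q 1 * X 3\<bar> = 2 * Q 1 * \<bar>X 3\<bar>" using q by (simp add: abs_mult)
  moreover have "g ^ 2 * (2 * Q 1 * A3) = g ^ 2 * ((cD 3 * A4 + L ^ 4 * S) / 3) + g ^ 2 * (\<bar>Q 0\<bar> * A4)
     + g ^ 2 * (\<bar>Q 3\<bar> * A1) + g ^ 2 * (3 * Q 1 * Vb * A2) + g ^ 2 * (\<bar>Q 0\<bar> * A4)"
    unfolding A3_def using q by (simp add: field_simps)
  ultimately have "2 * Q 1 * \<bar>X 3\<bar> \<le> 2 * Q 1 * (g ^ 2 * A3)" using b1 b2 b3 b4 b5 by (simp add: mult_ac)
  then show ?thesis unfolding g_def[symmetric] using q by simp
qed

lemma t2b: "S > 0 \<Longrightarrow> \<bar>X 2 - gam M m * Q 3 / (4 * Q 1)\<bar> \<le> (gam M m) ^ 2 * B2"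
proof -
  assume S: "S > 0"
  define g where "g = gam M m"
  have g: "0 < g" "g \<le> 1" using g_facts[OF mM2 gL2] unfolding g_def by auto
  have q: "Q 1 > 0" using Q1_pos[OF S] .
  have AA: "A2 \<ge> 0" "A4 \<ge> 0" "A1 \<ge> 0" using A_nn[OF S] by auto
  define F where "F = 2 * (Q 0 * X 3 - 2 * Q 1 * X 2) + g * (Q 3 + 3 * Q 1 * X 2 - Q 0 * X 3)"
  have e1: "2 * g * (Q 0 * X 3 - 2 * Q 1 * X 2) + g ^ 2 * (Q 3 + 3 * Q 1 * X 2 - Q 0 * X 3) = g * F"
    unfolding F_def by (simp add: algebra_simps power2_eq_square)
  have "g * \<bar>F\<bar> \<le> g * (cD 2 * X 4)"
    using s2b unfolding g_def[symmetric] e1 abs_mult using g by (simp add: mult_ac)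
  from this g(1) have hF: "\<bar>F\<bar> \<le> cD 2 * X 4" by (rule mult_left_le_imp_le)
  have x4: "X 4 \<le> g ^ 2 * A4" using t4[OF S] unfolding g_def .
  have x3: "\<bar>X 3\<bar> \<le> g ^ 2 * A3" using t3[OF S] unfolding g_def .
  have x2: "X 2 \<le> g * A2" using t2[OF S] unfolding g_def .
  have c1: "\<bar>F\<bar> \<le> g ^ 2 * (cD 2 * A4)"
  proof -
    have "cD 2 * X 4 \<le> cD 2 * (g ^ 2 * A4)" using x4 cD_nn by (rule mult_left_mono)
    then show ?thesis using hF by (simp add: mult_ac)
  qed
  have c2: "\<bar>2 * Q 0 * X 3\<bar> \<le> g ^ 2 * (2 * \<bar>Q 0\<bar> * A3)"
  proof -
    have "\<bar>2 * Q 0 * X 3\<bar> = (2 * \<bar>Q 0\<bar>) * \<bar>X 3\<bar>" by (simp add: abs_mult)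
    also have "\<dots> \<le> (2 * \<bar>Q 0\<bar>) * (g ^ 2 * A3)" using x3 by (rule mult_left_mono) simp
    finally show ?thesis by (simp add: mult_ac)
  qed
  have c3: "\<bar>3 * g * Q 1 * X 2\<bar> \<le> g ^ 2 * (3 * Q 1 * A2)"
  proof -
    have "\<bar>3 * g * Q 1 * X 2\<bar> = (3 * g * Q 1) * X 2" using g q X2_nn by (simp add: abs_mult)
    also have "\<dots> \<le> (3 * g * Q 1) * (g * A2)" using x2 g q by (intro mult_left_mono) auto
    finally show ?thesis by (simp add: mult_ac power2_eq_square)
  qed
  have c4: "\<bar>g * Q 0 * X 3\<bar> \<le> g ^ 2 * (\<bar>Q 0\<bar> * A3)"
  proof -
    have "\<bar>g * Q 0 * X 3\<bar> = g * (\<bar>Q 0\<bar> * \<bar>X 3\<bar>)" using g by (simp add: abs_mult)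
    also have "\<dots> \<le> 1 * (\<bar>Q 0\<bar> * \<bar>X 3\<bar>)" using g by (intro mult_right_mono) auto
    also have "\<dots> \<le> \<bar>Q 0\<bar> * (g ^ 2 * A3)" using x3 by (simp add: mult_left_mono)
    finally show ?thesis by (simp add: mult_ac)
  qed
  have id: "4 * Q 1 * X 2 - g * Q 3 = - F + 2 * Q 0 * X 3 + 3 * g * Q 1 * X 2 - g * Q 0 * X 3"
    unfolding F_def by (simp add: algebra_simps)
  have "\<bar>4 * Q 1 * X 2 - g * Q 3\<bar> \<le> \<bar>F\<bar> + \<bar>2 * Q 0 * X 3\<bar> + \<bar>3 * g * Q 1 * X 2\<bar> + \<bar>g * Q 0 * X 3\<bar>"
    unfolding id by linarith
  moreover have "g ^ 2 * (4 * Q 1 * B2) = g ^ 2 * (cD 2 * A4) + g ^ 2 * (2 * \<bar>Q 0\<bar> * A3)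
     + g ^ 2 * (3 * Q 1 * A2) + g ^ 2 * (\<bar>Q 0\<bar> * A3)"
    unfolding B2_def using q by (simp add: field_simps)
  ultimately have h: "\<bar>4 * Q 1 * X 2 - g * Q 3\<bar> \<le> g ^ 2 * (4 * Q 1 * B2)" using c1 c2 c3 c4 by linarith
  have "X 2 - g * Q 3 / (4 * Q 1) = (4 * Q 1 * X 2 - g * Q 3) / (4 * Q 1)" using q by (simp add: field_simps)
  then have "\<bar>X 2 - g * Q 3 / (4 * Q 1)\<bar> = \<bar>4 * Q 1 * X 2 - g * Q 3\<bar> / (4 * Q 1)" using q by simp
  also have "\<dots> \<le> g ^ 2 * (4 * Q 1 * B2) / (4 * Q 1)" using h q by (intro divide_right_mono) auto
  also have "\<dots> = g ^ 2 * B2" using q by simp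
  finally show ?thesis unfolding g_def .
qed

end

end


theorem mainTheorem2:
  fixes vmin vmax Vb :: real and pm pp :: "real \<Rightarrow> real"
  assumes "0 < vmin" "vmin < vmax"
    and "\<And>v. pm v \<ge> 0" "\<And>v. pp v \<ge> 0"
    and "integrable lborel pm" "integrable lborel pp"
    and "\<And>v. pm (- v) = pm v" "\<And>v. pp (- v) = pp v"
    and "\<And>v. \<bar>v\<bar> \<le> vmin \<or> \<bar>v\<bar> \<ge> vmax \<Longrightarrow> pm v = 0"
    and "\<And>v. \<bar>v\<bar> \<le> vmin \<or> \<bar>v\<bar> \<ge> vmax \<Longrightarrow> pp v = 0"
    and "Qk vmin vmax pm pp 2 = 0"
    and "0 < Vb"
  shows "\<exists>C \<epsilon>0. 0 < \<epsilon>0 \<and>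
    (\<forall>M m \<mu>. 0 < m \<and> m < M \<and> m / M < \<epsilon>0 \<and>
       Vb < (M - m) / (3 * M + m) * vmin \<and>
       stationary_dist pm pp M m Vb \<mu> \<and>
       (\<forall>\<nu>. stationary_dist pm pp M m Vb \<nu> \<longrightarrow> \<nu> = \<mu>) \<longrightarrow>
       \<bar>(\<integral>u. u ^ 2 \<partial>\<mu>) - Qk vmin vmax pm pp 3 / (2 * Qk vmin vmax pm pp 1) * (m / M)\<bar>
          \<le> C * (m / M) ^ 2 \<and>
       \<bar>(\<integral>u. u \<partial>\<mu>) - Qk vmin vmax pm pp 0 * Qk vmin vmax pm pp 3
            / (4 * (Qk vmin vmax pm pp 1) ^ 2) * (m / M)\<bar>
          \<le> C * (m / M) ^ 2)"
proof (cases "3 * Vb < vmin")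
  case False
  have "\<not> (0 < m \<and> m < M \<and> Vb < (M - m) / (3 * M + m) * vmin)" for M m :: real
  proof
    assume h: "0 < m \<and> m < M \<and> Vb < (M - m) / (3 * M + m) * vmin"
    have "(M - m) / (3 * M + m) * vmin \<le> (1 / 3) * vmin"
      using h assms(1) by (intro mult_right_mono) (auto simp: field_simps)
    then show False using h False by linarith
  qed
  then show ?thesis by (intro exI[of _ 0] exI[of _ 1]) auto
next
  case True
  interpret P: piston vmin vmax Vb pm pp
    by unfold_locales (use assms True in auto)
  show ?thesis
  proof (cases "P.S = 0")
    case True
    have "False" if h: "stationary_dist pm pp M m Vb \<mu>" "\<forall>\<nu>. stationary_dist pm pp M m Vb \<nu> \<longrightarrow> \<nu> = \<mu>" for M m \<mu>
    proof -
      have "return borel 0 = \<mu>" using h(2) P.S0_stat[OF True, of 0] assms(12) by auto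
      moreover have "return borel (Vb / 2) = \<mu>" using h(2) P.S0_stat[OF True, of "Vb / 2"] assms(12) by auto
      ultimately show False using P.returns_differ by simp
    qed
    then show ?thesis by (intro exI[of _ 0] exI[of _ 1]) auto
  next
    case False
    then have S: "P.S > 0" using P.S_nn by linarith
    have q: "P.Q 1 > 0" by (rule P.Q1_pos[OF S])
    define C2 where "C2 = 4 * P.B2 + \<bar>P.Q 3\<bar> / (2 * P.Q 1)"
    define C1 where "C1 = 4 * P.B1 + \<bar>P.Q 0\<bar> / (2 * P.Q 1) * C2"
    show ?thesis
    proof (rule exI[of _ "C1 + C2"], rule exI[of _ "Vb / (4 * P.L)"], intro conjI)
      show "0 < Vb / (4 * P.L)" using P.L_pos assms(12) by simp
    next
     show "\<forall>M m \<mu>. 0 < m \<and> m < M \<and> m / M < Vb / (4 * P.L) \<and>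
       Vb < (M - m) / (3 * M + m) * vmin \<and>
       stationary_dist pm pp M m Vb \<mu> \<and>
       (\<forall>\<nu>. stationary_dist pm pp M m Vb \<nu> \<longrightarrow> \<nu> = \<mu>) \<longrightarrow>
       \<bar>(\<integral>u. u ^ 2 \<partial>\<mu>) - Qk vmin vmax pm pp 3 / (2 * Qk vmin vmax pm pp 1) * (m / M)\<bar>
          \<le> (C1 + C2) * (m / M) ^ 2 \<and>
       \<bar>(\<integral>u. u \<partial>\<mu>) - Qk vmin vmax pm pp 0 * Qk vmin vmax pm pp 3
            / (4 * (Qk vmin vmax pm pp 1) ^ 2) * (m / M)\<bar>
          \<le> (C1 + C2) * (m / M) ^ 2"
     proof (intro allI impI)
      fix M m :: real and \<mu> :: "real measure"
      assume h: "0 < m \<and> m < M \<and> m / M < Vb / (4 * P.L) \<and> Vb < (M - m) / (3 * M + m) * vmin \<and>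
       stationary_dist pm pp M m Vb \<mu> \<and> (\<forall>\<nu>. stationary_dist pm pp M m Vb \<nu> \<longrightarrow> \<nu> = \<mu>)"
      then have mM: "0 < m" "m < M" and st: "stationary_dist pm pp M m Vb \<mu>"
        and eps: "m / M < Vb / (4 * P.L)" by auto
      define e where "e = m / M"
      define g where "g = P.gam M m"
      have e0: "0 < e" unfolding e_def using mM by simp
      have ge: "g \<le> 2 * e"
      proof -
        have "2 * m / (M + m) \<le> 2 * m / M" using mM by (intro frac_le) auto
        then show ?thesis unfolding g_def e_def P.gam_def by simp
      qed
      have gL: "P.gam M m * P.L \<le> Vb / 2"
      proof -
        have "P.gam M m * P.L \<le> 2 * e * P.L" using ge P.L_pos unfolding g_def by (intro mult_right_mono) auto
        also have "\<dots> \<le> 2 * (Vb / (4 * P.L)) * P.L" using eps P.L_pos unfolding e_def by (intro mult_right_mono) auto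
        also have "\<dots> = Vb / 2" using P.L_pos by simp
        finally show ?thesis .
      qed
      note gf = P.g_facts[OF mM gL]
      have g0: "0 < g" using gf unfolding g_def by simp
      have gd: "\<bar>g - 2 * e\<bar> \<le> 2 * e ^ 2" using gf unfolding g_def e_def by simp
      have g2: "g ^ 2 \<le> 4 * e ^ 2"
      proof -
        have "g ^ 2 \<le> (2 * e) ^ 2" using ge g0 by (intro power_mono) auto
        then show ?thesis by (simp add: power_mult_distrib)
      qed
      have X1: "P.X \<mu> 1 = (\<integral>u. u \<partial>\<mu>)" unfolding P.X_def[OF mM gL st] by simp
      have X2: "P.X \<mu> 2 = (\<integral>u. u ^ 2 \<partial>\<mu>)" unfolding P.X_def[OF mM gL st] by simp
      have QQ: "Qk vmin vmax pm pp k = P.Q k" for k unfolding P.Q_def by simp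
      have a2: "\<bar>P.X \<mu> 2 - g * P.Q 3 / (4 * P.Q 1)\<bar> \<le> g ^ 2 * P.B2"
        using P.t2b[OF mM gL st S] unfolding g_def .
      have B2: "P.B2 \<ge> 0"
      proof -
        have "0 \<le> g ^ 2 * P.B2" using a2 by linarith
        then show ?thesis using g0 by (simp add: zero_le_mult_iff)
      qed
      have a1: "\<bar>P.Q 0 * P.X \<mu> 2 - 2 * P.Q 1 * P.X \<mu> 1\<bar> \<le> g ^ 2 * (2 * P.Q 1 * P.B1)"
        using P.t1[OF mM gL st S] unfolding g_def .
      have B1: "P.B1 \<ge> 0"
      proof -
        have "0 \<le> g ^ 2 * (2 * P.Q 1 * P.B1)" using a1 by linarith
        then show ?thesis using g0 q by (simp add: zero_le_mult_iff)
      qed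
      have r2: "\<bar>P.X \<mu> 2 - P.Q 3 / (2 * P.Q 1) * e\<bar> \<le> C2 * e ^ 2"
      proof -
        have "P.X \<mu> 2 - P.Q 3 / (2 * P.Q 1) * e = (P.X \<mu> 2 - g * P.Q 3 / (4 * P.Q 1)) + P.Q 3 / (4 * P.Q 1) * (g - 2 * e)"
          using q by (simp add: field_simps)
        then have "\<bar>P.X \<mu> 2 - P.Q 3 / (2 * P.Q 1) * e\<bar> \<le> \<bar>P.X \<mu> 2 - g * P.Q 3 / (4 * P.Q 1)\<bar> + \<bar>P.Q 3 / (4 * P.Q 1)\<bar> * \<bar>g - 2 * e\<bar>"
          unfolding abs_mult[symmetric] by (metis abs_triangle_ineq)
        also have "\<dots> \<le> g ^ 2 * P.B2 + \<bar>P.Q 3 / (4 * P.Q 1)\<bar> * (2 * e ^ 2)"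
          using a2 gd by (intro add_mono mult_left_mono) auto
        also have "\<dots> \<le> (4 * e ^ 2) * P.B2 + \<bar>P.Q 3 / (4 * P.Q 1)\<bar> * (2 * e ^ 2)"
          using g2 B2 by (simp add: mult_right_mono)
        also have "\<dots> = C2 * e ^ 2" unfolding C2_def using q by (simp add: field_simps abs_divide)
        finally show ?thesis .
      qed
      have r1: "\<bar>P.X \<mu> 1 - P.Q 0 * P.Q 3 / (4 * (P.Q 1) ^ 2) * e\<bar> \<le> C1 * e ^ 2"
      proof -
        have "P.X \<mu> 1 - P.Q 0 * P.Q 3 / (4 * (P.Q 1) ^ 2) * e
          = - (P.Q 0 * P.X \<mu> 2 - 2 * P.Q 1 * P.X \<mu> 1) / (2 * P.Q 1) + P.Q 0 / (2 * P.Q 1) * (P.X \<mu> 2 - P.Q 3 / (2 * P.Q 1) * e)"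
          using q by (simp add: field_simps power2_eq_square)
        then have "\<bar>P.X \<mu> 1 - P.Q 0 * P.Q 3 / (4 * (P.Q 1) ^ 2) * e\<bar>
           \<le> \<bar>P.Q 0 * P.X \<mu> 2 - 2 * P.Q 1 * P.X \<mu> 1\<bar> / (2 * P.Q 1) + \<bar>P.Q 0 / (2 * P.Q 1)\<bar> * \<bar>P.X \<mu> 2 - P.Q 3 / (2 * P.Q 1) * e\<bar>"
        proof -
          have "\<bar>- (P.Q 0 * P.X \<mu> 2 - 2 * P.Q 1 * P.X \<mu> 1) / (2 * P.Q 1)\<bar> = \<bar>P.Q 0 * P.X \<mu> 2 - 2 * P.Q 1 * P.X \<mu> 1\<bar> / (2 * P.Q 1)"
            using q by (simp add: abs_divide)
          moreover have "\<bar>- (P.Q 0 * P.X \<mu> 2 - 2 * P.Q 1 * P.X \<mu> 1) / (2 * P.Q 1) + P.Q 0 / (2 * P.Q 1) * (P.X \<mu> 2 - P.Q 3 / (2 * P.Q 1) * e)\<bar>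
             \<le> \<bar>- (P.Q 0 * P.X \<mu> 2 - 2 * P.Q 1 * P.X \<mu> 1) / (2 * P.Q 1)\<bar> + \<bar>P.Q 0 / (2 * P.Q 1)\<bar> * \<bar>P.X \<mu> 2 - P.Q 3 / (2 * P.Q 1) * e\<bar>"
            unfolding abs_mult[symmetric] by (rule abs_triangle_ineq)
          ultimately show ?thesis using \<open>P.X \<mu> 1 - P.Q 0 * P.Q 3 / (4 * (P.Q 1) ^ 2) * e = _\<close> by simp
        qed
        also have "\<dots> \<le> g ^ 2 * (2 * P.Q 1 * P.B1) / (2 * P.Q 1) + \<bar>P.Q 0 / (2 * P.Q 1)\<bar> * (C2 * e ^ 2)"
          using a1 r2 q by (intro add_mono mult_left_mono divide_right_mono) auto
        also have "\<dots> = g ^ 2 * P.B1 + \<bar>P.Q 0 / (2 * P.Q 1)\<bar> * (C2 * e ^ 2)" using q by simp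
        also have "\<dots> \<le> (4 * e ^ 2) * P.B1 + \<bar>P.Q 0 / (2 * P.Q 1)\<bar> * (C2 * e ^ 2)"
          using g2 B1 by (simp add: mult_right_mono)
        also have "\<dots> = C1 * e ^ 2" unfolding C1_def using q by (simp add: field_simps abs_divide)
        finally show ?thesis .
      qed
      have C2nn: "C2 \<ge> 0" unfolding C2_def using B2 q by simp
      have C1nn: "C1 \<ge> 0" unfolding C1_def using B1 q C2nn by simp
      have "C2 * e ^ 2 \<le> (C1 + C2) * e ^ 2" using C1nn by (simp add: mult_right_mono)
      moreover have "C1 * e ^ 2 \<le> (C1 + C2) * e ^ 2" using C2nn by (simp add: mult_right_mono)
      ultimately show "\<bar>(\<integral>u. u ^ 2 \<partial>\<mu>) - Qk vmin vmax pm pp 3 / (2 * Qk vmin vmax pm pp 1) * (m / M)\<bar>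
          \<le> (C1 + C2) * (m / M) ^ 2 \<and>
       \<bar>(\<integral>u. u \<partial>\<mu>) - Qk vmin vmax pm pp 0 * Qk vmin vmax pm pp 3
            / (4 * (Qk vmin vmax pm pp 1) ^ 2) * (m / M)\<bar>
          \<le> (C1 + C2) * (m / M) ^ 2"
        using r1 r2 unfolding QQ X1[symmetric] X2[symmetric] e_def[symmetric] by linarith
     qed
    qed
  qed
qed

end
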